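(* Let $\mathsf U$ be a pseudovariety and $\mathsf V$ a subpseudovariety of $\mathsf U$. Suppose that $\mathsf V=[\![\Sigma]\!]_{\mathsf U}$ for some set $\Sigma$ of $\mathsf U$-pseudoidentities which is h-strong within $\mathsf U$ and each of whose members is t-strong within $\mathsf U$. Let $\Gamma$ be a set of $\mathsf U$-pseudoidentities such that $[\![\Gamma]\!]_{\mathsf U}\subseteq\mathsf V$. If the set $\Gamma'=\{\pi(u)=\pi(v):(u=v)\in\Gamma\}$ is h-strong within $\mathsf V$, then $\Gamma$ is h-strong within $\mathsf U$.
   Context: A pseudovariety is a nonempty class of finite algebras of a fixed finite type closed under homomorphic images, subalgebras and finite direct products. $\Omega_A\mathsf U$ is the free pro-$\mathsf U$ algebra on the finite set $A$; for $\mathsf V\subseteq\mathsf U$, $\pi=\pi_A:\Omega_A\mathsf U\to\Omega_A\mathsf V$ denotes the natural continuous homomorphism fixing the generators (for each finite $A$). A $\mathsf U$-pseudoidentity is $u=v$ with $u,v\in\Omega_B\mathsf U$, $B$ finite; it holds in $T\in\mathsf U$ if both sides agree under every continuous homomorphism $\Omega_B\mathsf U\to T$; $[\![\Gamma]\!]_{\mathsf U}$ is the class of members of $\mathsf U$ satisfying $\Gamma$. Provability (relative to an ambient pseudovariety $\mathsf W$, here $\mathsf U$ or $\mathsf V$): for a set $\Gamma$ of $\mathsf W$-pseudoidentities and finite $A$, $\Gamma_0\subseteq\Omega_A\mathsf W\times\Omega_A\mathsf W$ is the set of pairs $(\mathbf t(\varphi(u),w_1,\dots,w_n),\mathbf t(\varphi(v),w_1,\dots,w_n))$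 with $u=v$ or $v=u$ in $\Gamma$ ($u,v\in\Omega_B\mathsf W$), $\varphi:\Omega_B\mathsf W\to\Omega_A\mathsf W$ a continuous homomorphism, $\mathbf t$ a term, $w_i\in\Omega_A\mathsf W$; $\Gamma_{2\alpha+1}$ is the transitive closure of $\Gamma_{2\alpha}$; $\Gamma_{2\alpha+2}$ the topological closure of $\Gamma_{2\alpha+1}$; unions at limit ordinals; $u=v$ is provable from $\Gamma$ if $(u,v)\in\bigcup_\alpha\Gamma_\alpha$. A set $\Gamma$ of $\mathsf W$-pseudoidentities is h-strong within $\mathsf W$ if every $\mathsf W$-pseudoidentity valid in $[\![\Gamma]\!]_{\mathsf W}$ is provable from $\Gamma$. A $\mathsf W$-pseudoidentity $\varepsilon$ is t-strong within $\mathsf W$ if $\varepsilon$ is provable from every set $\Gamma$ of $\mathsf W$-pseudoidentities such that $[\![\Gamma]\!]_{\mathsf W}$ satisfies $\varepsilon$. *)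

theory Defs
  imports "HOL-Analysis.Analysis"
begin

text \<open>Finite algebras are represented on subsets of nat (every finite algebra has an
isomorphic copy there); classes are closed under isomorphism via closure under
surjective homomorphisms.\<close>

type_synonym 'f alg = "nat set \<times> ('f \<Rightarrow> nat list \<Rightarrow> nat)"

definition is_alg :: "('f \<Rightarrow> nat) \<Rightarrow> 'f alg \<Rightarrow> bool" where
  "is_alg ar T \<longleftrightarrow> finite (fst T) \<and> fst T \<noteq> {} \<and>
     (\<forall>f xs. length xs = ar f \<and> set xs \<subseteq> fst T \<longrightarrow> snd T f xs \<in> fst T)"

definition is_hom :: "('f \<Rightarrow> nat) \<Rightarrow> 'f alg \<Rightarrow> 'f alg \<Rightarrow> (nat \<Rightarrow> nat) \<Rightarrow> bool" where
  "is_hom ar T T' h \<longleftrightarrow> h \<in> fst T \<rightarrow> fst T' \<and>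
     (\<forall>f xs. length xs = ar f \<and> set xs \<subseteq> fst T \<longrightarrow> h (snd T f xs) = snd T' f (map h xs))"

definition is_subalg :: "('f \<Rightarrow> nat) \<Rightarrow> 'f alg \<Rightarrow> 'f alg \<Rightarrow> bool" where
  "is_subalg ar B T \<longleftrightarrow> fst B \<subseteq> fst T \<and>
     (\<forall>f xs. length xs = ar f \<and> set xs \<subseteq> fst B \<longrightarrow> snd B f xs = snd T f xs)"

definition is_prod :: "('f \<Rightarrow> nat) \<Rightarrow> 'f alg \<Rightarrow> nat set \<Rightarrow> (nat \<Rightarrow> 'f alg) \<Rightarrow> bool" where
  "is_prod ar C I As \<longleftrightarrow> (\<exists>p. bij_betw p (fst C) (PiE I (\<lambda>i. fst (As i))) \<and>
     (\<forall>f xs. length xs = ar f \<and> set xs \<subseteq> fst C \<longrightarrow>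
        p (snd C f xs) = (\<lambda>i\<in>I. snd (As i) f (map (\<lambda>x. p x i) xs))))"

definition pseudovariety :: "('f::finite \<Rightarrow> nat) \<Rightarrow> 'f alg set \<Rightarrow> bool" where
  "pseudovariety ar U \<longleftrightarrow> U \<noteq> {} \<and> (\<forall>T\<in>U. is_alg ar T) \<and>
     (\<forall>T T' h. T \<in> U \<and> is_alg ar T' \<and> is_hom ar T T' h \<and> h ` fst T = fst T' \<longrightarrow> T' \<in> U) \<and>
     (\<forall>T B. T \<in> U \<and> is_alg ar B \<and> is_subalg ar B T \<longrightarrow> B \<in> U) \<and>
     (\<forall>I As. finite I \<and> (\<forall>i\<in>I. As i \<in> U) \<longrightarrow> (\<exists>C\<in>U. is_prod ar C I As))"

text \<open>Free pro-U algebra on A, realised as the algebra of A-ary implicit operations on U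
(families indexed by pairs (T,a), T in U, a : A -> T, compatible with all homomorphisms),
with the pro-U (pointwise / product of discrete) topology.\<close>

type_synonym 'f iop = "'f alg \<times> (nat \<Rightarrow> nat) \<Rightarrow> nat"

definition idx :: "'f alg set \<Rightarrow> nat set \<Rightarrow> ('f alg \<times> (nat \<Rightarrow> nat)) set" where
  "idx U A = {(T, a). T \<in> U \<and> a \<in> A \<rightarrow>\<^sub>E fst T}"

definition Omega :: "('f \<Rightarrow> nat) \<Rightarrow> 'f alg set \<Rightarrow> nat set \<Rightarrow> 'f iop set" where
  "Omega ar U A = {w \<in> extensional (idx U A).
      (\<forall>T a. (T, a) \<in> idx U A \<longrightarrow> w (T, a) \<in> fst T) \<and>
      (\<forall>T T' h a. T \<in> U \<and> T' \<in> U \<and> is_hom ar T T' h \<and> a \<in> A \<rightarrow>\<^sub>E fst T \<longrightarrow>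
          w (T', restrict (h \<circ> a) A) = h (w (T, a)))}"

definition OmegaTop :: "('f \<Rightarrow> nat) \<Rightarrow> 'f alg set \<Rightarrow> nat set \<Rightarrow> 'f iop topology" where
  "OmegaTop ar U A = subtopology
     (product_topology (\<lambda>_. discrete_topology (UNIV :: nat set)) (idx U A)) (Omega ar U A)"

definition omop :: "'f alg set \<Rightarrow> nat set \<Rightarrow> 'f \<Rightarrow> 'f iop list \<Rightarrow> 'f iop" where
  "omop U A f ws = restrict (\<lambda>i. snd (fst i) f (map (\<lambda>w. w i) ws)) (idx U A)"

definition cont_hom :: "('f \<Rightarrow> nat) \<Rightarrow> 'f alg set \<Rightarrow> nat set \<Rightarrow> nat set \<Rightarrow> ('f iop \<Rightarrow> 'f iop) \<Rightarrow> bool" where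
  "cont_hom ar W B A \<phi> \<longleftrightarrow> continuous_map (OmegaTop ar W B) (OmegaTop ar W A) \<phi> \<and>
     (\<forall>f ws. length ws = ar f \<and> set ws \<subseteq> Omega ar W B \<longrightarrow>
        \<phi> (omop W B f ws) = omop W A f (map \<phi> ws))"

definition alg_hom_to :: "('f \<Rightarrow> nat) \<Rightarrow> 'f alg set \<Rightarrow> nat set \<Rightarrow> 'f alg \<Rightarrow> ('f iop \<Rightarrow> nat) \<Rightarrow> bool" where
  "alg_hom_to ar W B T \<psi> \<longleftrightarrow> continuous_map (OmegaTop ar W B) (discrete_topology (fst T)) \<psi> \<and>
     (\<forall>f ws. length ws = ar f \<and> set ws \<subseteq> Omega ar W B \<longrightarrow>
        \<psi> (omop W B f ws) = snd T f (map \<psi> ws))"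

text \<open>A W-pseudoidentity u = v over the finite variable set B is encoded as (B, u, v).\<close>
type_synonym 'f pid = "nat set \<times> 'f iop \<times> 'f iop"

definition is_pid :: "('f \<Rightarrow> nat) \<Rightarrow> 'f alg set \<Rightarrow> 'f pid \<Rightarrow> bool" where
  "is_pid ar W e \<longleftrightarrow> (case e of (B, u, v) \<Rightarrow> finite B \<and> u \<in> Omega ar W B \<and> v \<in> Omega ar W B)"

definition holds :: "('f \<Rightarrow> nat) \<Rightarrow> 'f alg set \<Rightarrow> 'f alg \<Rightarrow> 'f pid \<Rightarrow> bool" where
  "holds ar W T e \<longleftrightarrow> (case e of (B, u, v) \<Rightarrow> \<forall>\<psi>. alg_hom_to ar W B T \<psi> \<longrightarrow> \<psi> u = \<psi> v)"

definition Mods :: "('f \<Rightarrow> nat) \<Rightarrow> 'f alg set \<Rightarrow> 'f pid set \<Rightarrow> 'f alg set" where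
  "Mods ar W \<Gamma> = {T \<in> W. \<forall>e\<in>\<Gamma>. holds ar W T e}"

datatype 'f trm = TVar nat | TApp 'f "'f trm list"

fun wf_trm :: "('f \<Rightarrow> nat) \<Rightarrow> nat \<Rightarrow> 'f trm \<Rightarrow> bool" where
  "wf_trm ar m (TVar i) = (i < m)"
| "wf_trm ar m (TApp f ts) = (length ts = ar f \<and> (\<forall>t\<in>set ts. wf_trm ar m t))"

fun teval :: "'f alg set \<Rightarrow> nat set \<Rightarrow> 'f iop list \<Rightarrow> 'f trm \<Rightarrow> 'f iop" where
  "teval W A env (TVar i) = env ! i"
| "teval W A env (TApp f ts) = omop W A f (map (teval W A env) ts)"

definition Gamma0 :: "('f \<Rightarrow> nat) \<Rightarrow> 'f alg set \<Rightarrow> 'f pid set \<Rightarrow> nat set \<Rightarrow> ('f iop \<times> 'f iop) set" where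
  "Gamma0 ar W \<Gamma> A = {(teval W A (\<phi> u # ws) t, teval W A (\<phi> v # ws) t) | B u v \<phi> t ws.
      ((B, u, v) \<in> \<Gamma> \<or> (B, v, u) \<in> \<Gamma>) \<and> cont_hom ar W B A \<phi> \<and>
      set ws \<subseteq> Omega ar W A \<and> wf_trm ar (Suc (length ws)) t}"

text \<open>Provable pairs: the union of the transfinite chain Gamma_alpha, which equals the
least set containing Gamma_0 that is closed under transitivity and topological closure.\<close>
inductive_set provable :: "('f \<Rightarrow> nat) \<Rightarrow> 'f alg set \<Rightarrow> 'f pid set \<Rightarrow> nat set \<Rightarrow> ('f iop \<times> 'f iop) set"
  for ar W \<Gamma> A where
  base: "p \<in> Gamma0 ar W \<Gamma> A \<Longrightarrow> p \<in> provable ar W \<Gamma> A"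
| trans: "(x, y) \<in> provable ar W \<Gamma> A \<Longrightarrow> (y, z) \<in> provable ar W \<Gamma> A \<Longrightarrow> (x, z) \<in> provable ar W \<Gamma> A"
| clos: "p \<in> (prod_topology (OmegaTop ar W A) (OmegaTop ar W A)) closure_of R \<Longrightarrow>
         (\<And>q. q \<in> R \<Longrightarrow> q \<in> provable ar W \<Gamma> A) \<Longrightarrow> p \<in> provable ar W \<Gamma> A"

definition h_strong :: "('f \<Rightarrow> nat) \<Rightarrow> 'f alg set \<Rightarrow> 'f pid set \<Rightarrow> bool" where
  "h_strong ar W \<Gamma> \<longleftrightarrow> (\<forall>e\<in>\<Gamma>. is_pid ar W e) \<and>
     (\<forall>A u v. is_pid ar W (A, u, v) \<and> (\<forall>T\<in>Mods ar W \<Gamma>. holds ar W T (A, u, v))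
        \<longrightarrow> (u, v) \<in> provable ar W \<Gamma> A)"

definition t_strong :: "('f \<Rightarrow> nat) \<Rightarrow> 'f alg set \<Rightarrow> 'f pid \<Rightarrow> bool" where
  "t_strong ar W e \<longleftrightarrow> is_pid ar W e \<and>
     (case e of (A, u, v) \<Rightarrow> \<forall>\<Gamma>. (\<forall>e'\<in>\<Gamma>. is_pid ar W e') \<and> (\<forall>T\<in>Mods ar W \<Gamma>. holds ar W T e)
        \<longrightarrow> (u, v) \<in> provable ar W \<Gamma> A)"

text \<open>The natural projection Omega_B U -> Omega_B V (V subset U): restriction of an
implicit operation on U to the members of V.\<close>
definition proj :: "'f alg set \<Rightarrow> nat set \<Rightarrow> 'f iop \<Rightarrow> 'f iop" where
  "proj V B u = restrict u (idx V B)"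

definition proj_set :: "'f alg set \<Rightarrow> 'f pid set \<Rightarrow> 'f pid set" where
  "proj_set V \<Gamma> = {(B, proj V B u, proj V B v) | B u v. (B, u, v) \<in> \<Gamma>}"

end

theory Submission
  imports Defs
begin


definition gen :: "'f alg set \<Rightarrow> nat set \<Rightarrow> nat \<Rightarrow> 'f iop" where
  "gen W A b = restrict (\<lambda>i. snd i b) (idx W A)"

lemma topspace_OmegaTop: "topspace (OmegaTop ar W A) = Omega ar W A"
  unfolding OmegaTop_def Omega_def by (auto simp: PiE_def)

lemma Omega_ext: "w \<in> Omega ar W A \<Longrightarrow> w \<in> extensional (idx W A)"
  unfolding Omega_def by auto

lemma Omega_val: "w \<in> Omega ar W A \<Longrightarrow> (T,a) \<in> idx W A \<Longrightarrow> w (T,a) \<in> fst T"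
  unfolding Omega_def mem_Collect_eq by blast

lemma Omega_hom: "w \<in> Omega ar W A \<Longrightarrow> T \<in> W \<Longrightarrow> T' \<in> W \<Longrightarrow> is_hom ar T T' h \<Longrightarrow>
   a \<in> A \<rightarrow>\<^sub>E fst T \<Longrightarrow> w (T', restrict (h \<circ> a) A) = h (w (T,a))"
  unfolding Omega_def by blast

lemma idx_iff: "(T,a) \<in> idx W A \<longleftrightarrow> T \<in> W \<and> a \<in> A \<rightarrow>\<^sub>E fst T"
  unfolding idx_def by auto

lemma cyl_open:
  assumes "finite J" "J \<subseteq> idx W A"
  shows "openin (OmegaTop ar W A) {y \<in> Omega ar W A. \<forall>i\<in>J. y i = x i}"
proof -
  define X where "X i = (if i \<in> J then {x i} else (UNIV::nat set))" for i
  have o: "openin (product_topology (\<lambda>_. discrete_topology (UNIV :: nat set)) (idx W A)) (PiE (idx W A) X)"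
    by (rule product_topology_basis) (use assms in \<open>auto simp: X_def intro: finite_subset[of _ J]\<close>)
  have eq: "{y \<in> Omega ar W A. \<forall>i\<in>J. y i = x i} = PiE (idx W A) X \<inter> Omega ar W A"
  proof (intro equalityI subsetI)
    fix y assume "y \<in> {y \<in> Omega ar W A. \<forall>i\<in>J. y i = x i}"
    then show "y \<in> PiE (idx W A) X \<inter> Omega ar W A"
      using Omega_ext[of y] by (auto simp: X_def PiE_def Pi_def)
  next
    fix y assume y: "y \<in> PiE (idx W A) X \<inter> Omega ar W A"
    have "y i = x i" if "i \<in> J" for i
    proof -
      have "y i \<in> X i" using PiE_mem[of y "idx W A" X i] y that assms(2) by blast
      then show ?thesis using that by (simp add: X_def)
    qed
    then show "y \<in> {y \<in> Omega ar W A. \<forall>i\<in>J. y i = x i}" using y by blast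
  qed
  show ?thesis unfolding OmegaTop_def eq by (rule openin_subtopology_Int[OF o])
qed

lemma open_by_cyl:
  assumes "S \<subseteq> Omega ar W A"
    and "\<And>x. x \<in> S \<Longrightarrow> \<exists>J. finite J \<and> J \<subseteq> idx W A \<and> (\<forall>y\<in>Omega ar W A. (\<forall>i\<in>J. y i = x i) \<longrightarrow> y \<in> S)"
  shows "openin (OmegaTop ar W A) S"
proof -
  have "\<exists>T. openin (OmegaTop ar W A) T \<and> x \<in> T \<and> T \<subseteq> S" if xS: "x \<in> S" for x
  proof -
  obtain J where J: "finite J" "J \<subseteq> idx W A" "\<forall>y\<in>Omega ar W A. (\<forall>i\<in>J. y i = x i) \<longrightarrow> y \<in> S"
    using assms(2)[OF xS] by blast
  let ?C = "{y \<in> Omega ar W A. \<forall>i\<in>J. y i = x i}"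
  have "openin (OmegaTop ar W A) ?C" by (rule cyl_open[OF J(1,2)])
  moreover have "x \<in> ?C" using xS assms(1) by blast
  moreover have "?C \<subseteq> S" using J(3) by blast
  ultimately show "\<exists>T. openin (OmegaTop ar W A) T \<and> x \<in> T \<and> T \<subseteq> S" by blast
  qed
  then show ?thesis by (rule iffD2[OF openin_subopen, rule_format])
qed

lemma cyl_of_open:
  assumes "openin (OmegaTop ar W A) N" "x \<in> N"
  shows "\<exists>J. finite J \<and> J \<subseteq> idx W A \<and> (\<forall>y\<in>Omega ar W A. (\<forall>i\<in>J. y i = x i) \<longrightarrow> y \<in> N)"
proof -
  obtain N' where N': "openin (product_topology (\<lambda>_. discrete_topology (UNIV :: nat set)) (idx W A)) N'"
    "N = N' \<inter> Omega ar W A"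
    using assms(1) unfolding OmegaTop_def openin_subtopology by blast
  then obtain U where U: "finite {i \<in> idx W A. U i \<noteq> UNIV}" "x \<in> PiE (idx W A) U" "PiE (idx W A) U \<subseteq> N'"
    using assms(2) unfolding openin_product_topology_alt topspace_discrete_topology by blast
  show ?thesis
  proof (intro exI conjI ballI impI)
    show "finite {i \<in> idx W A. U i \<noteq> UNIV}" by (rule U(1))
    show "{i \<in> idx W A. U i \<noteq> UNIV} \<subseteq> idx W A" by auto
    fix y assume y: "y \<in> Omega ar W A" "\<forall>i\<in>{i \<in> idx W A. U i \<noteq> UNIV}. y i = x i"
    have yU: "y i \<in> U i" if i: "i \<in> idx W A" for i
    proof (cases "U i = UNIV")
      case False
      then have "y i = x i" using y(2) i by blast
      moreover have "x i \<in> U i" using U(2) i by (rule PiE_mem)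
      ultimately show ?thesis by simp
    qed simp
    have "y \<in> PiE (idx W A) U"
    proof (rule PiE_I)
      show "y i \<in> U i" if "i \<in> idx W A" for i using yU that by blast
      show "y i = undefined" if "i \<notin> idx W A" for i using Omega_ext[OF y(1)] that by (rule extensional_arb)
    qed
    then show "y \<in> N" using U(3) N'(2) y(1) by auto
  qed
qed

lemma cont_discrete:
  assumes "\<And>x. x \<in> Omega ar W A \<Longrightarrow> g x \<in> S"
    and "\<And>x. x \<in> Omega ar W A \<Longrightarrow> \<exists>J. finite J \<and> J \<subseteq> idx W A \<and> (\<forall>y\<in>Omega ar W A. (\<forall>i\<in>J. y i = x i) \<longrightarrow> g y = g x)"
  shows "continuous_map (OmegaTop ar W A) (discrete_topology S) g"
proof -
  have 1: "g \<in> topspace (OmegaTop ar W A) \<rightarrow> topspace (discrete_topology S)"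
  proof (rule Pi_I)
    fix x assume "x \<in> topspace (OmegaTop ar W A)"
    then have "g x \<in> S" by (intro assms(1)) (simp only: topspace_OmegaTop)
    then show "g x \<in> topspace (discrete_topology S)" by (simp only: topspace_discrete_topology)
  qed
  have 2: "openin (OmegaTop ar W A) {x \<in> topspace (OmegaTop ar W A). g x \<in> U}" for U
  proof -
    have "openin (OmegaTop ar W A) {x \<in> Omega ar W A. g x \<in> U}"
    proof (rule open_by_cyl)
      show "{x \<in> Omega ar W A. g x \<in> U} \<subseteq> Omega ar W A" by (rule Collect_restrict)
      fix x assume x: "x \<in> {x \<in> Omega ar W A. g x \<in> U}"
      then have xO: "x \<in> Omega ar W A" by blast
      obtain J where J0: "finite J \<and> J \<subseteq> idx W A \<and> (\<forall>y\<in>Omega ar W A. (\<forall>i\<in>J. y i = x i) \<longrightarrow> g y = g x)"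
        using assms(2)[OF xO] by (rule exE)
      have "\<forall>y\<in>Omega ar W A. (\<forall>i\<in>J. y i = x i) \<longrightarrow> y \<in> {x \<in> Omega ar W A. g x \<in> U}"
      proof (intro ballI impI CollectI conjI)
        fix y assume y: "y \<in> Omega ar W A" "\<forall>i\<in>J. y i = x i"
        show "y \<in> Omega ar W A" by (rule y(1))
        have "g y = g x" using J0 y by meson
        then show "g y \<in> U" using x by simp
      qed
      then show "\<exists>J. finite J \<and> J \<subseteq> idx W A \<and> (\<forall>y\<in>Omega ar W A. (\<forall>i\<in>J. y i = x i) \<longrightarrow> y \<in> {x \<in> Omega ar W A. g x \<in> U})"
        using J0 by (intro exI[of _ J]) simp
    qed
    then show ?thesis by (simp only: topspace_OmegaTop)
  qed
  show ?thesis unfolding continuous_map_def using 1 2 by (intro conjI allI impI) simp_all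
qed

lemma cont_coord:
  assumes "\<And>x. x \<in> Omega ar W A \<Longrightarrow> f x \<in> Omega ar W' A'"
    and "\<And>k. k \<in> idx W' A' \<Longrightarrow> \<exists>j\<in>idx W A. \<forall>x\<in>Omega ar W A. \<forall>y\<in>Omega ar W A. x j = y j \<longrightarrow> f x k = f y k"
  shows "continuous_map (OmegaTop ar W A) (OmegaTop ar W' A') f"
proof -
  have "continuous_map (OmegaTop ar W A) (product_topology (\<lambda>_. discrete_topology (UNIV :: nat set)) (idx W' A')) f"
    unfolding continuous_map_componentwise topspace_OmegaTop
  proof (intro conjI ballI)
    show "f ` Omega ar W A \<subseteq> extensional (idx W' A')" using assms(1) Omega_ext by blast
    fix k assume k: "k \<in> idx W' A'"
    obtain j where j: "j \<in> idx W A" "\<forall>x\<in>Omega ar W A. \<forall>y\<in>Omega ar W A. x j = y j \<longrightarrow> f x k = f y k"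
      using assms(2)[OF k] by (rule bexE)
    show "continuous_map (OmegaTop ar W A) (discrete_topology UNIV) (\<lambda>x. f x k)"
    proof (rule cont_discrete)
      fix x assume x: "x \<in> Omega ar W A"
      have "\<forall>y\<in>Omega ar W A. (\<forall>i\<in>{j}. y i = x i) \<longrightarrow> f y k = f x k"
      proof (intro ballI impI)
        fix y assume y: "y \<in> Omega ar W A" "\<forall>i\<in>{j}. y i = x i"
        then have "y j = x j" by simp
        then show "f y k = f x k" using j(2) x y(1) by meson
      qed
      then show "\<exists>J. finite J \<and> J \<subseteq> idx W A \<and> (\<forall>y\<in>Omega ar W A. (\<forall>i\<in>J. y i = x i) \<longrightarrow> f y k = f x k)"
        using j(1) by (intro exI[of _ "{j}"]) simp
    qed simp
  qed
  then have "continuous_map (OmegaTop ar W A) (subtopology (product_topology (\<lambda>_. discrete_topology (UNIV :: nat set)) (idx W' A')) (Omega ar W' A')) f"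
    by (rule continuous_map_into_subtopology) (use assms(1) in \<open>simp add: topspace_OmegaTop\<close>)
  then show ?thesis by (simp only: OmegaTop_def)
qed



lemma pv1: "pseudovariety ar W \<Longrightarrow> \<forall>T\<in>W. is_alg ar T"
  unfolding pseudovariety_def by (elim conjE) assumption
lemma pv2: "pseudovariety ar W \<Longrightarrow> \<forall>T B. T \<in> W \<and> is_alg ar B \<and> is_subalg ar B T \<longrightarrow> B \<in> W"
  unfolding pseudovariety_def by (elim conjE) assumption
lemma pv3: "pseudovariety ar W \<Longrightarrow> \<forall>I As. finite I \<and> (\<forall>i\<in>I. As i \<in> W) \<longrightarrow> (\<exists>C\<in>W. is_prod ar C I As)"
  unfolding pseudovariety_def by (elim conjE) assumption
lemmas pv_parts = pv1 pv2 pv3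

lemma pv_alg: "pseudovariety ar W \<Longrightarrow> T \<in> W \<Longrightarrow> is_alg ar T"
  using pv_parts(1) by (rule bspec)

lemma pv_sub: "pseudovariety ar W \<Longrightarrow> T \<in> W \<Longrightarrow> is_alg ar B \<Longrightarrow> is_subalg ar B T \<Longrightarrow> B \<in> W"
  using pv_parts(2) by blast

lemma pv_prod: "pseudovariety ar W \<Longrightarrow> finite I \<Longrightarrow> (\<And>i. i \<in> I \<Longrightarrow> As i \<in> W) \<Longrightarrow> \<exists>C\<in>W. is_prod ar C I As"
  using pv_parts(3) by blast

lemma alg_op: "is_alg ar T \<Longrightarrow> length xs = ar f \<Longrightarrow> set xs \<subseteq> fst T \<Longrightarrow> snd T f xs \<in> fst T"
  unfolding is_alg_def by simp

lemma hom_op: "is_hom ar T T' h \<Longrightarrow> length xs = ar f \<Longrightarrow> set xs \<subseteq> fst T \<Longrightarrow> h (snd T f xs) = snd T' f (map h xs)"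
  unfolding is_hom_def by simp

lemma hom_fun: "is_hom ar T T' h \<Longrightarrow> x \<in> fst T \<Longrightarrow> h x \<in> fst T'"
  unfolding is_hom_def by (simp add: Pi_iff)

lemma restrict_hom_idx: "is_hom ar T T' h \<Longrightarrow> a \<in> A \<rightarrow>\<^sub>E fst T \<Longrightarrow> restrict (h \<circ> a) A \<in> A \<rightarrow>\<^sub>E fst T'"
  unfolding is_hom_def by (auto simp: PiE_def Pi_def)

lemma OmegaI:
  assumes "w \<in> extensional (idx W A)"
    and "\<And>T a. (T,a) \<in> idx W A \<Longrightarrow> w (T,a) \<in> fst T"
    and "\<And>T T' h a. T \<in> W \<Longrightarrow> T' \<in> W \<Longrightarrow> is_hom ar T T' h \<Longrightarrow> a \<in> A \<rightarrow>\<^sub>E fst T \<Longrightarrow> w (T', restrict (h \<circ> a) A) = h (w (T,a))"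
  shows "w \<in> Omega ar W A"
  unfolding Omega_def mem_Collect_eq using assms by blast

lemma omop_at: "(T,a) \<in> idx W A \<Longrightarrow> omop W A f ws (T,a) = snd T f (map (\<lambda>w. w (T,a)) ws)"
  unfolding omop_def by simp

lemma omop_Omega:
  assumes pv: "pseudovariety ar W" and ws: "set ws \<subseteq> Omega ar W A" and len: "length ws = ar f"
  shows "omop W A f ws \<in> Omega ar W A"
proof (rule OmegaI)
  show "omop W A f ws \<in> extensional (idx W A)" unfolding omop_def by (rule restrict_extensional)
  fix T a assume Ta: "(T,a) \<in> idx W A"
  have "set (map (\<lambda>w. w (T,a)) ws) \<subseteq> fst T" using ws Omega_val[OF _ Ta] by auto
  then show "omop W A f ws (T,a) \<in> fst T"
    unfolding omop_at[OF Ta] using alg_op[OF pv_alg[OF pv] _ _] Ta len by (simp add: idx_iff)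
next
  fix T T' h a assume T: "T \<in> W" "T' \<in> W" "is_hom ar T T' h" "a \<in> A \<rightarrow>\<^sub>E fst T"
  have Ta: "(T,a) \<in> idx W A" using T by (simp add: idx_iff)
  have Ta': "(T', restrict (h \<circ> a) A) \<in> idx W A" using T restrict_hom_idx by (simp add: idx_iff)
  have sub: "set (map (\<lambda>w. w (T,a)) ws) \<subseteq> fst T" using ws Omega_val[OF _ Ta] by auto
  have eq: "map (\<lambda>w. w (T', restrict (h \<circ> a) A)) ws = map h (map (\<lambda>w. w (T,a)) ws)"
    using ws Omega_hom[OF _ T] by auto
  have hm: "h (snd T f (map (\<lambda>w. w (T,a)) ws)) = snd T' f (map h (map (\<lambda>w. w (T,a)) ws))"
    by (rule hom_op[OF T(3) _ sub]) (simp add: len)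
  show "omop W A f ws (T', restrict (h \<circ> a) A) = h (omop W A f ws (T,a))"
    unfolding omop_at[OF Ta] omop_at[OF Ta'] eq hm ..
qed

lemma teval_Omega:
  assumes pv: "pseudovariety ar W"
  shows "set env \<subseteq> Omega ar W A \<Longrightarrow> wf_trm ar (length env) t \<Longrightarrow> teval W A env t \<in> Omega ar W A"
proof (induction t)
  case (TVar i)
  then show ?case by auto
next
  case (TApp f ts)
  have "set (map (teval W A env) ts) \<subseteq> Omega ar W A" using TApp by auto
  moreover have "length (map (teval W A env) ts) = ar f" using TApp by simp
  ultimately show ?case using omop_Omega[OF pv] by simp
qed

lemma gen_at: "(T,a) \<in> idx W A \<Longrightarrow> gen W A b (T,a) = a b"
  unfolding gen_def by simp

lemma gen_Omega:
  assumes "b \<in> A"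
  shows "gen W A b \<in> Omega ar W A"
proof (rule OmegaI)
  show "gen W A b \<in> extensional (idx W A)" unfolding gen_def by (rule restrict_extensional)
  fix T a assume Ta: "(T,a) \<in> idx W A"
  then show "gen W A b (T,a) \<in> fst T" using assms by (auto simp: gen_at idx_iff)
next
  fix T T' h a assume T: "T \<in> W" "T' \<in> W" "is_hom ar T T' h" "a \<in> A \<rightarrow>\<^sub>E fst T"
  have Ta: "(T,a) \<in> idx W A" using T by (simp add: idx_iff)
  have Ta': "(T', restrict (h \<circ> a) A) \<in> idx W A" using T restrict_hom_idx by (simp add: idx_iff)
  show "gen W A b (T', restrict (h \<circ> a) A) = h (gen W A b (T,a))"
    unfolding gen_at[OF Ta] gen_at[OF Ta'] using assms by simp
qed

lemma idx_mono: "V \<subseteq> U \<Longrightarrow> idx V A \<subseteq> idx U A"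
  unfolding idx_def by auto

lemma proj_at: "k \<in> idx V A \<Longrightarrow> proj V A u k = u k"
  unfolding proj_def by simp

lemma proj_Omega:
  assumes VU: "V \<subseteq> U" and u: "u \<in> Omega ar U A"
  shows "proj V A u \<in> Omega ar V A"
proof (rule OmegaI)
  show "proj V A u \<in> extensional (idx V A)" unfolding proj_def by (rule restrict_extensional)
  fix T a assume Ta: "(T,a) \<in> idx V A"
  then have "(T,a) \<in> idx U A" using idx_mono[OF VU] by blast
  then show "proj V A u (T,a) \<in> fst T" unfolding proj_at[OF Ta] by (rule Omega_val[OF u])
next
  fix T T' h a assume T: "T \<in> V" "T' \<in> V" "is_hom ar T T' h" "a \<in> A \<rightarrow>\<^sub>E fst T"
  have Ta: "(T,a) \<in> idx V A" using T by (simp add: idx_iff)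
  have Ta': "(T', restrict (h \<circ> a) A) \<in> idx V A" using T restrict_hom_idx by (simp add: idx_iff)
  have "u (T', restrict (h \<circ> a) A) = h (u (T,a))" using Omega_hom[OF u _ _ T(3,4)] T(1,2) VU by blast
  then show "proj V A u (T', restrict (h \<circ> a) A) = h (proj V A u (T,a))"
    unfolding proj_at[OF Ta] proj_at[OF Ta'] .
qed

lemma proj_omop:
  assumes "V \<subseteq> U"
  shows "proj V A (omop U A f ws) = omop V A f (map (proj V A) ws)"
proof (rule ext)
  fix k show "proj V A (omop U A f ws) k = omop V A f (map (proj V A) ws) k"
  proof (cases "k \<in> idx V A")
    case True
    then have "k \<in> idx U A" using idx_mono[OF assms] by blast
    then show ?thesis using True by (simp add: proj_def omop_def o_def)
  next
    case False
    then show ?thesis by (simp add: proj_def omop_def)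
  qed
qed

lemma proj_teval:
  assumes "V \<subseteq> U"
  shows "wf_trm ar (length env) t \<Longrightarrow> proj V A (teval U A env t) = teval V A (map (proj V A) env) t"
proof (induction t)
  case (TVar i)
  then show ?case by simp
next
  case (TApp f ts)
  then have eq: "map (proj V A) (map (teval U A env) ts) = map (teval V A (map (proj V A) env)) ts"
    by auto
  show ?case by (simp only: teval.simps proj_omop[OF assms] eq)
qed

lemma proj_cont:
  assumes VU: "V \<subseteq> U"
  shows "continuous_map (OmegaTop ar U A) (OmegaTop ar V A) (proj V A)"
proof (rule cont_coord)
  show "proj V A x \<in> Omega ar V A" if "x \<in> Omega ar U A" for x by (rule proj_Omega[OF VU that])
  fix k assume k: "k \<in> idx V A"
  have "\<forall>x\<in>Omega ar U A. \<forall>y\<in>Omega ar U A. x k = y k \<longrightarrow> proj V A x k = proj V A y k"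
    using k by (simp add: proj_at)
  then show "\<exists>j\<in>idx U A. \<forall>x\<in>Omega ar U A. \<forall>y\<in>Omega ar U A. x j = y j \<longrightarrow> proj V A x k = proj V A y k"
    using k idx_mono[OF VU] by blast
qed



lemma closure_agree:
  assumes w: "w \<in> (product_topology (\<lambda>_. discrete_topology (UNIV::nat set)) (idx W A)) closure_of (Omega ar W A)"
    and J: "finite J" "J \<subseteq> idx W A"
  shows "\<exists>y\<in>Omega ar W A. \<forall>i\<in>J. y i = w i"
proof -
  define X where "X i = (if i \<in> J then {w i} else (UNIV::nat set))" for i
  have o: "openin (product_topology (\<lambda>_. discrete_topology (UNIV :: nat set)) (idx W A)) (PiE (idx W A) X)"
  proof (rule product_topology_basis)
    show "openin (discrete_topology UNIV) (X i)" for i by simp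
    have "{i. X i \<noteq> topspace (discrete_topology UNIV)} \<subseteq> J" by (auto simp: X_def)
    then show "finite {i. X i \<noteq> topspace (discrete_topology UNIV)}" using J(1) by (rule finite_subset)
  qed
  have wt: "w \<in> topspace (product_topology (\<lambda>_. discrete_topology (UNIV::nat set)) (idx W A))"
    using closure_of_subset_topspace w by (rule subsetD)
  have wX1: "w i \<in> X i" for i
  proof (cases "i \<in> J")
    case True
    then have "X i = {w i}" unfolding X_def by (rule if_P)
    then show ?thesis by (simp only: singleton_iff)
  next
    case False
    then have "X i = UNIV" unfolding X_def by (rule if_not_P)
    then show ?thesis by (simp only: UNIV_I)
  qed
  have wX2: "w i = undefined" if "i \<notin> idx W A" for i
      using PiE_arb[OF wt[unfolded topspace_product_topology] that] .
  have wX: "w \<in> PiE (idx W A) X" using wX1 wX2 by (intro PiE_I)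

  have "\<exists>y. y \<in> Omega ar W A \<and> y \<in> PiE (idx W A) X"
    using w o wX unfolding in_closure_of by blast
  then obtain y where y: "y \<in> Omega ar W A" "y \<in> PiE (idx W A) X" by blast
  have "y i = w i" if "i \<in> J" for i
  proof -
    have "y i \<in> X i" using PiE_mem[OF y(2)] that J(2) by blast
    then show ?thesis using that by (simp add: X_def)
  qed
  then show ?thesis using y(1) by blast
qed

lemma Omega_sub_top: "Omega ar W A \<subseteq> topspace (product_topology (\<lambda>_. discrete_topology (UNIV::nat set)) (idx W A))"
proof
  fix w assume "w \<in> Omega ar W A"
  then have "w \<in> extensional (idx W A)" by (rule Omega_ext)
  then show "w \<in> topspace (product_topology (\<lambda>_. discrete_topology (UNIV::nat set)) (idx W A))"
    by (simp add: PiE_def)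
qed

lemma Omega_closed:
  "closedin (product_topology (\<lambda>_. discrete_topology (UNIV::nat set)) (idx W A)) (Omega ar W A)"
proof -
  let ?P = "product_topology (\<lambda>_. discrete_topology (UNIV::nat set)) (idx W A)"
  have "?P closure_of (Omega ar W A) \<subseteq> Omega ar W A"
  proof
    fix w assume w: "w \<in> ?P closure_of (Omega ar W A)"
    have wt: "w \<in> topspace ?P" using closure_of_subset_topspace w by (rule subsetD)
    show "w \<in> Omega ar W A"
    proof (rule OmegaI)
      show "w \<in> extensional (idx W A)" using wt by (simp add: PiE_def)
      fix T a assume Ta: "(T,a) \<in> idx W A"
      obtain y where y: "y \<in> Omega ar W A" "\<forall>i\<in>{(T,a)}. y i = w i"
        using closure_agree[OF w, of "{(T,a)}"] Ta by auto
      then have "y (T,a) = w (T,a)" by simp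
      then show "w (T,a) \<in> fst T" using Omega_val[OF y(1) Ta] by simp
    next
      fix T T' h a assume T: "T \<in> W" "T' \<in> W" "is_hom ar T T' h" "a \<in> A \<rightarrow>\<^sub>E fst T"
      have Ta: "(T,a) \<in> idx W A" using T by (simp add: idx_iff)
      have Ta': "(T', restrict (h \<circ> a) A) \<in> idx W A" using T restrict_hom_idx by (simp add: idx_iff)
      obtain y where y: "y \<in> Omega ar W A" "\<forall>i\<in>{(T,a), (T', restrict (h \<circ> a) A)}. y i = w i"
        using closure_agree[OF w, of "{(T,a), (T', restrict (h \<circ> a) A)}"] Ta Ta' by auto
      then have e1: "y (T,a) = w (T,a)" and e2: "y (T', restrict (h \<circ> a) A) = w (T', restrict (h \<circ> a) A)"
        by simp_all
      have "y (T', restrict (h \<circ> a) A) = h (y (T,a))" by (rule Omega_hom[OF y(1) T])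
      then show "w (T', restrict (h \<circ> a) A) = h (w (T,a))" unfolding e1 e2 .
    qed
  qed
  then show ?thesis using Omega_sub_top closure_of_subset_eq by blast
qed

lemma Omega_compact:
  assumes pv: "pseudovariety ar W"
  shows "compact_space (OmegaTop ar W A)"
proof -
  let ?P = "product_topology (\<lambda>_. discrete_topology (UNIV::nat set)) (idx W A)"
  have "compactin ?P (PiE (idx W A) (\<lambda>i. fst (fst i)))"
  proof -
    have "compactin (discrete_topology UNIV) (fst (fst i))" if "i \<in> idx W A" for i
    proof -
      have "fst i \<in> W" using that by (cases i) (simp add: idx_iff)
      then have "finite (fst (fst i))" using pv_alg[OF pv] by (simp add: is_alg_def)
      then show ?thesis by (intro finite_imp_compactin) auto
    qed
    then show ?thesis by (simp add: compactin_PiE)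
  qed
  moreover have "Omega ar W A \<subseteq> PiE (idx W A) (\<lambda>i. fst (fst i))"
  proof
    fix w assume w: "w \<in> Omega ar W A"
    show "w \<in> PiE (idx W A) (\<lambda>i. fst (fst i))"
    proof (rule PiE_I)
      fix i assume i: "i \<in> idx W A"
      obtain T a where Ta: "i = (T,a)" by (cases i)
      show "w i \<in> fst (fst i)" using Omega_val[OF w i[unfolded Ta]] Ta by simp
    next
      fix i assume "i \<notin> idx W A"
      then show "w i = undefined" using Omega_ext[OF w] by (rule extensional_arb[rotated])
    qed
  qed
  ultimately have "compactin ?P (Omega ar W A)" using Omega_closed closed_compactin by blast
  then show ?thesis unfolding OmegaTop_def by (rule compact_space_subtopology)
qed

lemma Omega_Hausdorff: "Hausdorff_space (OmegaTop ar W A)"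
  unfolding OmegaTop_def by (intro Hausdorff_space_subtopology) (simp add: Hausdorff_space_product_topology)

lemma cont_into: "continuous_map X Y f \<Longrightarrow> x \<in> topspace X \<Longrightarrow> f x \<in> topspace Y"
  unfolding continuous_map_def by (elim conjE) (erule funcset_mem)

lemma cont_open: "continuous_map X Y f \<Longrightarrow> openin Y U \<Longrightarrow> openin X {x \<in> topspace X. f x \<in> U}"
  unfolding continuous_map_def by (elim conjE) (erule allE, erule mp)

lemma unif_dep:
  assumes pv: "pseudovariety ar W" and cont: "continuous_map (OmegaTop ar W A) (discrete_topology S) \<psi>"
  shows "\<exists>F. finite F \<and> F \<subseteq> idx W A \<and> (\<forall>x\<in>Omega ar W A. \<forall>y\<in>Omega ar W A. (\<forall>i\<in>F. x i = y i) \<longrightarrow> \<psi> x = \<psi> y)"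
proof -
  have "\<forall>x\<in>Omega ar W A. \<exists>J. finite J \<and> J \<subseteq> idx W A \<and> (\<forall>y\<in>Omega ar W A. (\<forall>i\<in>J. y i = x i) \<longrightarrow> y \<in> {z \<in> topspace (OmegaTop ar W A). \<psi> z \<in> {\<psi> x}})"
  proof
    fix x assume x: "x \<in> Omega ar W A"
    have "\<psi> x \<in> S" using cont_into[OF cont] x by (simp add: topspace_OmegaTop)
    then have "openin (OmegaTop ar W A) {z \<in> topspace (OmegaTop ar W A). \<psi> z \<in> {\<psi> x}}"
      by (intro cont_open[OF cont]) simp
    moreover have "x \<in> {z \<in> topspace (OmegaTop ar W A). \<psi> z \<in> {\<psi> x}}" using x by (simp add: topspace_OmegaTop)
    ultimately show "\<exists>J. finite J \<and> J \<subseteq> idx W A \<and> (\<forall>y\<in>Omega ar W A. (\<forall>i\<in>J. y i = x i) \<longrightarrow> y \<in> {z \<in> topspace (OmegaTop ar W A). \<psi> z \<in> {\<psi> x}})"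
      by (rule cyl_of_open)
  qed
  from bchoice[OF this] obtain Jf where Jf: "\<forall>x\<in>Omega ar W A. finite (Jf x) \<and> Jf x \<subseteq> idx W A \<and> (\<forall>y\<in>Omega ar W A. (\<forall>i\<in>Jf x. y i = x i) \<longrightarrow> y \<in> {z \<in> topspace (OmegaTop ar W A). \<psi> z \<in> {\<psi> x}})"
    by (rule exE)
  have Jf1: "finite (Jf x)" "Jf x \<subseteq> idx W A" if "x \<in> Omega ar W A" for x
    using Jf that by simp_all
  have Jf2: "\<psi> y = \<psi> x" if "x \<in> Omega ar W A" "y \<in> Omega ar W A" "\<forall>i\<in>Jf x. y i = x i" for x y
  proof -
    have "y \<in> {z \<in> topspace (OmegaTop ar W A). \<psi> z \<in> {\<psi> x}}"
      using Jf that by meson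
    then show ?thesis by simp
  qed
  define C where "C x = {y \<in> Omega ar W A. \<forall>i\<in>Jf x. y i = x i}" for x
  have "\<forall>U\<in>C ` Omega ar W A. openin (OmegaTop ar W A) U"
    using cyl_open Jf1 unfolding C_def by blast
  moreover have "\<Union> (C ` Omega ar W A) = topspace (OmegaTop ar W A)"
    unfolding topspace_OmegaTop C_def by blast
  ultimately obtain \<F> where \<F>: "finite \<F>" "\<F> \<subseteq> C ` Omega ar W A" "\<Union>\<F> = topspace (OmegaTop ar W A)"
    using Omega_compact[OF pv] unfolding compact_space by meson
  obtain X0 where X0: "X0 \<subseteq> Omega ar W A" "finite X0" "\<F> = C ` X0"
    using finite_subset_image[OF \<F>(1,2)] by blast
  define F where "F = \<Union> (Jf ` X0)"
  have "finite F" unfolding F_def using X0 Jf1 by blast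
  moreover have "F \<subseteq> idx W A" unfolding F_def using X0 Jf1 by blast
  moreover have "\<forall>x\<in>Omega ar W A. \<forall>y\<in>Omega ar W A. (\<forall>i\<in>F. x i = y i) \<longrightarrow> \<psi> x = \<psi> y"
  proof (intro ballI impI)
    fix x y assume x: "x \<in> Omega ar W A" and y: "y \<in> Omega ar W A" and xy: "\<forall>i\<in>F. x i = y i"
    have "x \<in> \<Union>\<F>" using \<F>(3) x by (simp add: topspace_OmegaTop)
    then obtain x0 where x0: "x0 \<in> X0" "x \<in> C x0" using X0(3) by blast
    have x0O: "x0 \<in> Omega ar W A" using x0 X0 by blast
    have ax: "\<forall>i\<in>Jf x0. x i = x0 i" using x0(2) unfolding C_def by blast
    have ay: "\<forall>i\<in>Jf x0. y i = x0 i"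
    proof
      fix i assume i: "i \<in> Jf x0"
      then have "i \<in> F" unfolding F_def using x0(1) by blast
      then have "x i = y i" using xy by blast
      then show "y i = x0 i" using ax i by simp
    qed
    have "\<psi> x = \<psi> x0" by (rule Jf2[OF x0O x ax])
    moreover have "\<psi> y = \<psi> x0" by (rule Jf2[OF x0O y ay])
    ultimately show "\<psi> x = \<psi> y" by simp
  qed
  ultimately show ?thesis by blast
qed



lemma prod_for:
  assumes pv: "pseudovariety ar W" and F: "finite F" "F \<subseteq> idx W A"
  shows "\<exists>C c H. C \<in> W \<and> c \<in> A \<rightarrow>\<^sub>E fst C \<and>
     (\<forall>k\<in>F. is_hom ar C (fst k) (H k) \<and> restrict (H k \<circ> c) A = snd k) \<and>
     (\<forall>x\<in>fst C. \<forall>y\<in>fst C. (\<forall>k\<in>F. H k x = H k y) \<longrightarrow> x = y)"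
proof -
  obtain ks where ks: "set ks = F" "distinct ks" using finite_distinct_list[OF F(1)] by blast
  define I where "I = {..<length ks}"
  define As where "As i = fst (ks ! i)" for i
  have ksidx: "ks ! i \<in> idx W A" if "i \<in> I" for i
    using that ks(1) F(2) nth_mem[of i ks] unfolding I_def by blast
  have sndks: "snd (ks ! i) \<in> A \<rightarrow>\<^sub>E fst (As i)" if "i \<in> I" for i
    using ksidx[OF that] unfolding As_def by (cases "ks ! i") (simp add: idx_iff)
  have As: "As i \<in> W" if "i \<in> I" for i
    using ksidx[OF that] unfolding As_def by (cases "ks ! i") (simp add: idx_iff)
  have fI: "finite I" unfolding I_def by simp
  obtain C where C: "C \<in> W" "is_prod ar C I As" using pv_prod[OF pv fI As] by (rule bexE)
  obtain p where p: "bij_betw p (fst C) (PiE I (\<lambda>i. fst (As i)))"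
    "\<forall>f xs. length xs = ar f \<and> set xs \<subseteq> fst C \<longrightarrow> p (snd C f xs) = (\<lambda>i\<in>I. snd (As i) f (map (\<lambda>x. p x i) xs))"
    using C(2) unfolding is_prod_def by (elim exE conjE) (rule that; assumption)
  have pimg: "p ` fst C = PiE I (\<lambda>i. fst (As i))" using p(1) by (rule bij_betw_imp_surj_on)
  have pinto: "p x \<in> PiE I (\<lambda>i. fst (As i))" if "x \<in> fst C" for x using pimg that by blast
  have pinj: "inj_on p (fst C)" using p(1) by (rule bij_betw_imp_inj_on)
  define sel where "sel k = (THE i. i < length ks \<and> ks ! i = k)" for k
  have sel_nth: "sel (ks ! i) = i" if "i < length ks" for i
  proof -
    have "(THE j. j < length ks \<and> ks ! j = ks ! i) = i"
    proof (rule the_equality)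
      show "i < length ks \<and> ks ! i = ks ! i" using that by simp
      fix j assume "j < length ks \<and> ks ! j = ks ! i"
      then show "j = i" using nth_eq_iff_index_eq[OF ks(2) _ that] by blast
    qed
    then show ?thesis unfolding sel_def .
  qed
  have sel: "sel k < length ks \<and> ks ! sel k = k" if "k \<in> F" for k
  proof -
    have "k \<in> set ks" using that ks(1) by simp
    then obtain i where i: "i < length ks \<and> ks ! i = k" unfolding in_set_conv_nth by (rule exE)
    then show ?thesis using sel_nth[of i] by simp
  qed
  define H where "H k = (\<lambda>x. p x (sel k))" for k
  define c where "c = restrict (\<lambda>b. inv_into (fst C) p (\<lambda>i\<in>I. snd (ks ! i) b)) A"
  have tup: "(\<lambda>i\<in>I. snd (ks ! i) b) \<in> PiE I (\<lambda>i. fst (As i))" if "b \<in> A" for b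
  proof (rule PiE_I)
    fix i assume "i \<in> I"
    then show "(\<lambda>i\<in>I. snd (ks ! i) b) i \<in> fst (As i)" using sndks that by (auto simp: PiE_def Pi_def)
  qed simp
  have pinv: "p (c b) = (\<lambda>i\<in>I. snd (ks ! i) b)" if "b \<in> A" for b
    unfolding c_def using that f_inv_into_f[of _ p "fst C"] tup[OF that] pimg by simp
  have cC: "c \<in> A \<rightarrow>\<^sub>E fst C"
  proof (rule PiE_I)
    fix b assume "b \<in> A"
    then show "c b \<in> fst C" unfolding c_def using inv_into_into[of _ p "fst C"] tup pimg by simp
  qed (simp add: c_def)
  have hom: "is_hom ar C (fst k) (H k) \<and> restrict (H k \<circ> c) A = snd k" if k: "k \<in> F" for k
  proof -
    let ?i = "sel k"
    have iI: "?i \<in> I" using sel[OF k] unfolding I_def by simp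
    have ksi: "ks ! ?i = k" using sel[OF k] by simp
    have fk: "fst k = As ?i" unfolding As_def ksi ..
    have "is_hom ar C (fst k) (H k)"
      unfolding is_hom_def
    proof (intro conjI allI impI)
      show "H k \<in> fst C \<rightarrow> fst (fst k)"
      proof
        fix x assume "x \<in> fst C"
        then have "p x \<in> PiE I (\<lambda>i. fst (As i))" by (rule pinto)
        then show "H k x \<in> fst (fst k)" unfolding H_def fk using iI by (rule PiE_mem)
      qed
      fix f xs assume fx: "length xs = ar f \<and> set xs \<subseteq> fst C"
      have "p (snd C f xs) = (\<lambda>i\<in>I. snd (As i) f (map (\<lambda>x. p x i) xs))"
        using p(2)[rule_format, OF fx] .
      then have "p (snd C f xs) ?i = snd (As ?i) f (map (\<lambda>x. p x ?i) xs)" using iI by simp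
      then show "H k (snd C f xs) = snd (fst k) f (map (H k) xs)" unfolding H_def fk by simp
    qed
    moreover have "restrict (H k \<circ> c) A = snd k"
    proof (rule ext)
      fix b show "restrict (H k \<circ> c) A b = snd k b"
      proof (cases "b \<in> A")
        case True
        then show ?thesis using pinv[OF True] iI ksi by (simp add: H_def)
      next
        case False
        have "snd k \<in> A \<rightarrow>\<^sub>E fst (As ?i)" using sndks[OF iI] ksi by simp
        then have "snd k b = undefined" using False by (rule PiE_arb)
        then show ?thesis using False by simp
      qed
    qed
    ultimately show ?thesis ..
  qed
  have inj: "x = y" if xy: "x \<in> fst C" "y \<in> fst C" "\<forall>k\<in>F. H k x = H k y" for x y
  proof -
    have "p x i = p y i" if i: "i \<in> I" for i
    proof -
      have "ks ! i \<in> F" using i ks(1) unfolding I_def by auto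
      with xy(3) have "H (ks ! i) x = H (ks ! i) y" by (rule bspec)
      then show ?thesis unfolding H_def using sel_nth[of i] i unfolding I_def by simp
    qed
    moreover have "p x \<in> extensional I" "p y \<in> extensional I" using pinto xy(1,2) by (auto simp: PiE_def)
    ultimately have "p x = p y" by (intro extensionalityI[of _ I]) auto
    then show ?thesis using pinj xy(1,2) by (meson inj_onD)
  qed
  have hom': "\<forall>k\<in>F. is_hom ar C (fst k) (H k) \<and> restrict (H k \<circ> c) A = snd k"
    by (rule ballI) (rule hom)
  have inj': "\<forall>x\<in>fst C. \<forall>y\<in>fst C. (\<forall>k\<in>F. H k x = H k y) \<longrightarrow> x = y"
    by (intro ballI impI) (rule inj)
  show ?thesis
    by (rule exI[of _ C], rule exI[of _ c], rule exI[of _ H], intro conjI; fact)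
qed

lemma list_lift: "set xs \<subseteq> g ` S \<Longrightarrow> \<exists>ws. set ws \<subseteq> S \<and> xs = map g ws"
proof (induction xs)
  case Nil
  then show ?case by simp
next
  case (Cons x xs)
  then obtain ws where ws: "set ws \<subseteq> S" "xs = map g ws" by auto
  obtain w where w: "w \<in> S" "x = g w" using Cons.prems by auto
  show ?case by (rule exI[of _ "w # ws"]) (use ws w in simp)
qed

lemma sub_image:
  assumes pvU: "pseudovariety ar U" and pvV: "pseudovariety ar V" and VU: "V \<subseteq> U"
    and C: "C \<in> V" and c: "c \<in> A \<rightarrow>\<^sub>E fst C" and ne: "Omega ar U A \<noteq> {}"
  shows "((\<lambda>w. w (C,c)) ` Omega ar U A, snd C) \<in> V"
    and "is_hom ar ((\<lambda>w. w (C,c)) ` Omega ar U A, snd C) C id"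
    and "c \<in> A \<rightarrow>\<^sub>E (\<lambda>w. w (C,c)) ` Omega ar U A"
proof -
  let ?Q = "((\<lambda>w. w (C,c)) ` Omega ar U A, snd C)"
  have CU: "(C,c) \<in> idx U A" using C VU c by (auto simp: idx_iff)
  have sub: "(\<lambda>w. w (C,c)) ` Omega ar U A \<subseteq> fst C" using Omega_val[OF _ CU] by blast
  have algC: "is_alg ar C" using pv_alg[OF pvV C] .
  have "is_alg ar ?Q"
    unfolding is_alg_def fst_conv snd_conv
  proof (intro conjI allI impI)
    show "finite ((\<lambda>w. w (C,c)) ` Omega ar U A)" using sub algC finite_subset by (auto simp: is_alg_def)
    show "(\<lambda>w. w (C,c)) ` Omega ar U A \<noteq> {}" using ne by blast
    fix f xs assume fx: "length xs = ar f \<and> set xs \<subseteq> (\<lambda>w. w (C,c)) ` Omega ar U A"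
    then obtain ws where ws: "set ws \<subseteq> Omega ar U A" "xs = map (\<lambda>w. w (C,c)) ws"
      using list_lift by blast
    have "snd C f xs = omop U A f ws (C,c)" using ws(2) omop_at[OF CU] by simp
    moreover have "omop U A f ws \<in> Omega ar U A" using omop_Omega[OF pvU ws(1)] fx ws(2) by simp
    ultimately show "snd C f xs \<in> (\<lambda>w. w (C,c)) ` Omega ar U A" by simp
  qed
  moreover have "is_subalg ar ?Q C" unfolding is_subalg_def using sub by simp
  ultimately show "?Q \<in> V" using pv_sub[OF pvV C] by blast
  show "is_hom ar ?Q C id" unfolding is_hom_def using sub by auto
  show "c \<in> A \<rightarrow>\<^sub>E (\<lambda>w. w (C,c)) ` Omega ar U A"
  proof (rule PiE_I)
    fix b assume b: "b \<in> A"
    have e: "gen U A b (C,c) = c b" by (rule gen_at[OF CU])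
    show "c b \<in> (\<lambda>w. w (C,c)) ` Omega ar U A" 
    proof (rule image_eqI[where x="gen U A b"])
      show "c b = gen U A b (C,c)" using e by simp
      show "gen U A b \<in> Omega ar U A" using b by (rule gen_Omega)
    qed
  next
    fix b assume "b \<notin> A" then show "c b = undefined" using c by (rule PiE_arb[rotated])
  qed
qed

lemma alg_hom_cont: "alg_hom_to ar W A T \<psi> \<Longrightarrow> continuous_map (OmegaTop ar W A) (discrete_topology (fst T)) \<psi>"
  unfolding alg_hom_to_def by (elim conjE)

lemma alg_hom_op: "alg_hom_to ar W A T \<psi> \<Longrightarrow> length ws = ar f \<Longrightarrow> set ws \<subseteq> Omega ar W A \<Longrightarrow>
   \<psi> (omop W A f ws) = snd T f (map \<psi> ws)"
  unfolding alg_hom_to_def by simp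

lemma alg_hom_into: "alg_hom_to ar W A T \<psi> \<Longrightarrow> w \<in> Omega ar W A \<Longrightarrow> \<psi> w \<in> fst T"
  using cont_into[OF alg_hom_cont] by (fastforce simp: topspace_OmegaTop)



lemma KL:
  assumes pv: "pseudovariety ar W" and T: "T \<in> W" and psi: "alg_hom_to ar W A T \<psi>"
    and w: "w \<in> Omega ar W A"
  shows "\<psi> w = w (T, restrict (\<lambda>b. \<psi> (gen W A b)) A)"
proof -
  obtain F where F: "finite F" "F \<subseteq> idx W A"
    "\<forall>x\<in>Omega ar W A. \<forall>y\<in>Omega ar W A. (\<forall>i\<in>F. x i = y i) \<longrightarrow> \<psi> x = \<psi> y"
    using unif_dep[OF pv alg_hom_cont[OF psi]] by (elim exE conjE) (rule that; assumption)
  obtain C c H where CcH: "C \<in> W" "c \<in> A \<rightarrow>\<^sub>E fst C"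
    "\<forall>k\<in>F. is_hom ar C (fst k) (H k) \<and> restrict (H k \<circ> c) A = snd k"
    "\<forall>x\<in>fst C. \<forall>y\<in>fst C. (\<forall>k\<in>F. H k x = H k y) \<longrightarrow> x = y"
    using prod_for[OF pv F(1,2)] by (elim exE conjE) (rule that; assumption)
  have ne: "Omega ar W A \<noteq> {}" using w by blast
  define Q where "Q = ((\<lambda>w. w (C,c)) ` Omega ar W A, snd C)"
  have Q: "Q \<in> W" "is_hom ar Q C id" "c \<in> A \<rightarrow>\<^sub>E fst Q"
    using sub_image[OF pv pv subset_refl CcH(1,2) ne] unfolding Q_def by simp_all
  have CW: "(C,c) \<in> idx W A" using CcH(1,2) by (simp add: idx_iff)
  have agreeF: "x k = H k (x (C,c))" if x: "x \<in> Omega ar W A" and k: "k \<in> F" for x k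
  proof -
    obtain K a where Ka: "k = (K,a)" by (cases k)
    have kW: "(K,a) \<in> idx W A" using k F(2) Ka by blast
    have "is_hom ar C (fst k) (H k) \<and> restrict (H k \<circ> c) A = snd k" using CcH(3) k by (rule bspec)
    then have hk: "is_hom ar C K (H k)" "restrict (H k \<circ> c) A = a" using Ka by simp_all
    have KW: "K \<in> W" using kW by (simp add: idx_iff)
    have "x (K, restrict (H k \<circ> c) A) = H k (x (C,c))" by (rule Omega_hom[OF x CcH(1) KW hk(1) CcH(2)])
    then have "x (K,a) = H k (x (C,c))" by (simp only: hk(2))
    then show ?thesis by (simp only: Ka)
  qed
  have dep: "\<psi> x = \<psi> y" if xy: "x \<in> Omega ar W A" "y \<in> Omega ar W A" "x (C,c) = y (C,c)" for x y
  proof -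
    have "\<forall>i\<in>F. x i = y i"
    proof
      fix i assume i: "i \<in> F"
      have "x i = H i (x (C,c))" by (rule agreeF[OF xy(1) i])
      also have "\<dots> = H i (y (C,c))" unfolding xy(3) ..
      also have "\<dots> = y i" by (rule agreeF[OF xy(2) i, symmetric])
      finally show "x i = y i" .
    qed
    then show ?thesis using F(3) xy(1,2) by meson
  qed
  define g where "g q = \<psi> (SOME x. x \<in> Omega ar W A \<and> x (C,c) = q)" for q
  have g: "g (x (C,c)) = \<psi> x" if x: "x \<in> Omega ar W A" for x
  proof -
    have ex: "\<exists>z. z \<in> Omega ar W A \<and> z (C,c) = x (C,c)" using x by blast
    have s: "(SOME z. z \<in> Omega ar W A \<and> z (C,c) = x (C,c)) \<in> Omega ar W A \<and>
       (SOME z. z \<in> Omega ar W A \<and> z (C,c) = x (C,c)) (C,c) = x (C,c)" by (rule someI_ex[OF ex])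
    have "\<psi> (SOME z. z \<in> Omega ar W A \<and> z (C,c) = x (C,c)) = \<psi> x"
      using dep[OF conjunct1[OF s] x conjunct2[OF s]] .
    then show ?thesis unfolding g_def .
  qed
  have ghom: "is_hom ar Q T g"
    unfolding is_hom_def
  proof (intro conjI allI impI)
    show "g \<in> fst Q \<rightarrow> fst T"
    proof
      fix q assume "q \<in> fst Q"
      then obtain x where x: "x \<in> Omega ar W A" "q = x (C,c)" unfolding Q_def by auto
      show "g q \<in> fst T" unfolding x(2) g[OF x(1)] by (rule alg_hom_into[OF psi x(1)])
    qed
    fix f xs assume fx: "length xs = ar f \<and> set xs \<subseteq> fst Q"
    then have "set xs \<subseteq> (\<lambda>w. w (C,c)) ` Omega ar W A" unfolding Q_def by simp
    then obtain ws where ws: "set ws \<subseteq> Omega ar W A" "xs = map (\<lambda>w. w (C,c)) ws"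
      using list_lift by blast
    have len: "length ws = ar f" using fx ws(2) by simp
    have om: "omop W A f ws \<in> Omega ar W A" by (rule omop_Omega[OF pv ws(1) len])
    have sQ: "snd Q f xs = omop W A f ws (C,c)" unfolding Q_def ws(2) omop_at[OF CW] by simp
    have mg: "map g xs = map \<psi> ws" unfolding ws(2) using ws(1) g by auto
    show "g (snd Q f xs) = snd T f (map g xs)"
      unfolding sQ g[OF om] mg by (rule alg_hom_op[OF psi len ws(1)])
  qed
  have e1: "w (T, restrict (g \<circ> c) A) = g (w (Q, c))" by (rule Omega_hom[OF w Q(1) T ghom Q(3)])
  have e2: "w (C, restrict (id \<circ> c) A) = id (w (Q,c))" by (rule Omega_hom[OF w Q(1) CcH(1) Q(2) Q(3)])
  have e3: "restrict (id \<circ> c) A = c" using CcH(2) by (simp add: PiE_def extensional_restrict)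
  have e4: "restrict (g \<circ> c) A = restrict (\<lambda>b. \<psi> (gen W A b)) A"
  proof (rule restrict_ext)
    fix b assume b: "b \<in> A"
    have "c b = gen W A b (C,c)" by (rule gen_at[OF CW, symmetric])
    then show "(g \<circ> c) b = \<psi> (gen W A b)" using g[OF gen_Omega[OF b]] by simp
  qed
  have "w (Q,c) = w (C,c)" using e2 unfolding e3 by simp
  then have "\<psi> w = g (w (Q,c))" using g[OF w] by simp
  then show ?thesis using e1 e4 by simp
qed



fun tsub :: "(nat \<Rightarrow> 'f trm) \<Rightarrow> 'f trm \<Rightarrow> 'f trm" where
  "tsub s (TVar i) = s i"
| "tsub s (TApp f ts) = TApp f (map (tsub s) ts)"

lemma teval_tsub: "wf_trm ar n t \<Longrightarrow> teval W A env (tsub s t) = teval W A (map (\<lambda>i. teval W A env (s i)) [0..<n]) t"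
proof (induction t)
  case (TVar i)
  then show ?case by simp
next
  case (TApp f ts)
  then have "map (teval W A env) (map (tsub s) ts) = map (teval W A (map (\<lambda>i. teval W A env (s i)) [0..<n])) ts"
    by auto
  then show ?case by (simp only: tsub.simps teval.simps)
qed

lemma wf_tsub: "wf_trm ar n t \<Longrightarrow> (\<And>i. i < n \<Longrightarrow> wf_trm ar m (s i)) \<Longrightarrow> wf_trm ar m (tsub s t)"
  by (induction t) auto

lemma wf_trm_mono: "wf_trm ar n t \<Longrightarrow> n \<le> m \<Longrightarrow> wf_trm ar m t"
  by (induction t) auto

lemma teval_append: "wf_trm ar (length xs) t \<Longrightarrow> teval W A (xs @ ys) t = teval W A xs t"
proof (induction t)
  case (TVar i)
  then show ?case by (simp add: nth_append)
next
  case (TApp f ts)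
  then have "map (teval W A (xs @ ys)) ts = map (teval W A xs) ts" by auto
  then show ?case by (simp only: teval.simps)
qed

lemma ctx_eval:
  assumes t': "wf_trm ar (Suc (length ws')) t'" and t: "wf_trm ar (Suc (length ws)) t"
  shows "teval W A (x # ws' @ ws) (tsub (\<lambda>i. if i = 0 then t' else TVar (Suc (length ws') + (i - 1))) t)
       = teval W A (teval W A (x # ws') t' # ws) t"
proof -
  let ?s = "\<lambda>i. if i = 0 then t' else TVar (Suc (length ws') + (i - 1))"
  let ?env = "x # ws' @ ws"
  have "map (\<lambda>i. teval W A ?env (?s i)) [0..<Suc (length ws)] = teval W A (x # ws') t' # ws"
  proof (rule nth_equalityI)
    show "length (map (\<lambda>i. teval W A ?env (?s i)) [0..<Suc (length ws)]) = length (teval W A (x # ws') t' # ws)"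
      by simp
    fix i assume "i < length (map (\<lambda>i. teval W A ?env (?s i)) [0..<Suc (length ws)])"
    then have i: "i < Suc (length ws)" by simp
    show "map (\<lambda>i. teval W A ?env (?s i)) [0..<Suc (length ws)] ! i = (teval W A (x # ws') t' # ws) ! i"
    proof (cases i)
      case 0
      have "teval W A ((x # ws') @ ws) t' = teval W A (x # ws') t'"
        by (rule teval_append) (use t' in simp)
      then show ?thesis using 0 by (simp del: upt_Suc)
    next
      case (Suc j)
      then have j: "j < length ws" using i by simp
      have "?env ! (Suc (length ws') + j) = ws ! j" by (simp add: nth_append)
      then show ?thesis using Suc j by (simp del: upt_Suc)
    qed
  qed
  then show ?thesis using teval_tsub[OF t, of W A ?env ?s] by simp
qed

lemma teval_dep: "k \<in> idx W A \<Longrightarrow> x k = y k \<Longrightarrow> teval W A (x # ws) t k = teval W A (y # ws) t k"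
proof (induction t)
  case (TVar i)
  then show ?case by (cases i) simp_all
next
  case (TApp f ts)
  then have eq: "map (\<lambda>z. z k) (map (teval W A (x # ws)) ts) = map (\<lambda>z. z k) (map (teval W A (y # ws)) ts)"
    by auto
  have "teval W A (x # ws) (TApp f ts) k = snd (fst k) f (map (\<lambda>z. z k) (map (teval W A (x # ws)) ts))"
    using TApp.prems(1) by (simp add: omop_def)
  also have "\<dots> = snd (fst k) f (map (\<lambda>z. z k) (map (teval W A (y # ws)) ts))" unfolding eq ..
  also have "\<dots> = teval W A (y # ws) (TApp f ts) k"
    using TApp.prems(1) by (simp add: omop_def)
  finally show ?case .
qed

lemma teval_cont:
  assumes pv: "pseudovariety ar W" and ws: "set ws \<subseteq> Omega ar W A" and t: "wf_trm ar (Suc (length ws)) t"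
  shows "continuous_map (OmegaTop ar W A) (OmegaTop ar W A) (\<lambda>x. teval W A (x # ws) t)"
proof (rule cont_coord)
  show "teval W A (x # ws) t \<in> Omega ar W A" if "x \<in> Omega ar W A" for x
    using teval_Omega[OF pv, of "x # ws" A t] that ws t by simp
  fix k assume k: "k \<in> idx W A"
  have "\<forall>x\<in>Omega ar W A. \<forall>y\<in>Omega ar W A. x k = y k \<longrightarrow> teval W A (x # ws) t k = teval W A (y # ws) t k"
    using teval_dep[OF k] by blast
  then show "\<exists>j\<in>idx W A. \<forall>x\<in>Omega ar W A. \<forall>y\<in>Omega ar W A. x j = y j \<longrightarrow> teval W A (x # ws) t k = teval W A (y # ws) t k"
    using k by (rule bexI)
qed

lemma Gamma0I:
  assumes "(B, u, v) \<in> \<Gamma> \<or> (B, v, u) \<in> \<Gamma>" "cont_hom ar W B A \<phi>" "set ws \<subseteq> Omega ar W A"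
    "wf_trm ar (Suc (length ws)) t"
  shows "(teval W A (\<phi> u # ws) t, teval W A (\<phi> v # ws) t) \<in> Gamma0 ar W \<Gamma> A"
  unfolding Gamma0_def mem_Collect_eq
  by (rule exI[of _ B], rule exI[of _ u], rule exI[of _ v], rule exI[of _ \<phi>], rule exI[of _ t],
      rule exI[of _ ws]) (use assms in simp)

lemma Gamma0E:
  assumes "p \<in> Gamma0 ar W \<Gamma> A"
  obtains B u v \<phi> t ws where "p = (teval W A (\<phi> u # ws) t, teval W A (\<phi> v # ws) t)"
    "(B, u, v) \<in> \<Gamma> \<or> (B, v, u) \<in> \<Gamma>" "cont_hom ar W B A \<phi>" "set ws \<subseteq> Omega ar W A"
    "wf_trm ar (Suc (length ws)) t"
  using assms unfolding Gamma0_def mem_Collect_eq by (elim exE conjE) (rule that; assumption)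

lemma ch_cont: "cont_hom ar W B A \<phi> \<Longrightarrow> continuous_map (OmegaTop ar W B) (OmegaTop ar W A) \<phi>"
  unfolding cont_hom_def by (elim conjE)

lemma ch_into: "cont_hom ar W B A \<phi> \<Longrightarrow> x \<in> Omega ar W B \<Longrightarrow> \<phi> x \<in> Omega ar W A"
  using cont_into[OF ch_cont, of ar W B A \<phi> x] by (simp add: topspace_OmegaTop)

lemma ch_op: "cont_hom ar W B A \<phi> \<Longrightarrow> length ws = ar f \<Longrightarrow> set ws \<subseteq> Omega ar W B \<Longrightarrow>
   \<phi> (omop W B f ws) = omop W A f (map \<phi> ws)"
  unfolding cont_hom_def by simp

lemma ch_teval:
  assumes pv: "pseudovariety ar W" and ph: "cont_hom ar W B A \<phi>" and env: "set env \<subseteq> Omega ar W B"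
  shows "wf_trm ar (length env) t \<Longrightarrow> \<phi> (teval W B env t) = teval W A (map \<phi> env) t"
proof (induction t)
  case (TVar i)
  then show ?case by simp
next
  case (TApp f ts)
  have sub: "set (map (teval W B env) ts) \<subseteq> Omega ar W B" using TApp.prems env teval_Omega[OF pv] by auto
  have len: "length (map (teval W B env) ts) = ar f" using TApp.prems by simp
  have eq: "map \<phi> (map (teval W B env) ts) = map (teval W A (map \<phi> env)) ts" using TApp by auto
  show ?case by (simp only: teval.simps ch_op[OF ph len sub] eq)
qed

lemma ch_comp:
  assumes "cont_hom ar W B0 B \<psi>" "cont_hom ar W B A \<phi>"
  shows "cont_hom ar W B0 A (\<phi> \<circ> \<psi>)"
  unfolding cont_hom_def
proof (intro conjI allI impI)
  show "continuous_map (OmegaTop ar W B0) (OmegaTop ar W A) (\<phi> \<circ> \<psi>)"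
    using ch_cont[OF assms(1)] ch_cont[OF assms(2)] by (rule continuous_map_compose)
  fix f ws assume fw: "length ws = ar f \<and> set ws \<subseteq> Omega ar W B0"
  have "set (map \<psi> ws) \<subseteq> Omega ar W B" using fw ch_into[OF assms(1)] by auto
  then show "(\<phi> \<circ> \<psi>) (omop W B0 f ws) = omop W A f (map (\<phi> \<circ> \<psi>) ws)"
    using ch_op[OF assms(1)] ch_op[OF assms(2)] fw by simp
qed

lemma prov_Omega:
  assumes "\<forall>e\<in>\<Gamma>. is_pid ar W e" and pv: "pseudovariety ar W"
  shows "p \<in> provable ar W \<Gamma> A \<Longrightarrow> p \<in> Omega ar W A \<times> Omega ar W A"
proof (induction rule: provable.induct)
  case (base p)
  then obtain B u v \<phi> t ws where p: "p = (teval W A (\<phi> u # ws) t, teval W A (\<phi> v # ws) t)"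
    "(B, u, v) \<in> \<Gamma> \<or> (B, v, u) \<in> \<Gamma>" "cont_hom ar W B A \<phi>" "set ws \<subseteq> Omega ar W A"
    "wf_trm ar (Suc (length ws)) t" by (rule Gamma0E)
  have "u \<in> Omega ar W B \<and> v \<in> Omega ar W B" using p(2) assms(1) unfolding is_pid_def by auto
  then have "\<phi> u \<in> Omega ar W A" "\<phi> v \<in> Omega ar W A" using ch_into[OF p(3)] by auto
  then show ?case unfolding p(1) using teval_Omega[OF pv] p(4,5) by simp
next
  case (trans x y z)
  then show ?case by simp
next
  case (clos p R)
  then show ?case using closure_of_subset_topspace[of "prod_topology (OmegaTop ar W A) (OmegaTop ar W A)" R]
    by (auto simp: topspace_OmegaTop)
qed

lemma cont_swap: "continuous_map (prod_topology X X) (prod_topology X X) (\<lambda>p. (snd p, fst p))"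
  by (intro continuous_map_pairedI continuous_map_fst continuous_map_snd)

lemma cont_pair: "continuous_map X Y f \<Longrightarrow> continuous_map (prod_topology X X) (prod_topology Y Y) (\<lambda>p. (f (fst p), f (snd p)))"
  by (intro continuous_map_pairedI; rule continuous_map_compose[of _ X, unfolded o_def]; (rule continuous_map_fst | rule continuous_map_snd)?)

lemma prov_sym:
  "p \<in> provable ar W \<Gamma> A \<Longrightarrow> (snd p, fst p) \<in> provable ar W \<Gamma> A"
proof (induction rule: provable.induct)
  case (base p)
  then obtain B u v \<phi> t ws where p: "p = (teval W A (\<phi> u # ws) t, teval W A (\<phi> v # ws) t)"
    "(B, u, v) \<in> \<Gamma> \<or> (B, v, u) \<in> \<Gamma>" "cont_hom ar W B A \<phi>" "set ws \<subseteq> Omega ar W A"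
    "wf_trm ar (Suc (length ws)) t" by (rule Gamma0E)
  have "(B, v, u) \<in> \<Gamma> \<or> (B, u, v) \<in> \<Gamma>" using p(2) by blast
  then have "(teval W A (\<phi> v # ws) t, teval W A (\<phi> u # ws) t) \<in> Gamma0 ar W \<Gamma> A"
    using p(3,4,5) by (rule Gamma0I)
  then show ?case unfolding p(1) by (simp add: provable.base)
next
  case (trans x y z)
  then show ?case using provable.trans by simp
next
  case (clos p R)
  let ?s = "\<lambda>p. (snd p, fst p)"
  have "?s p \<in> prod_topology (OmegaTop ar W A) (OmegaTop ar W A) closure_of (?s ` R)"
    using continuous_map_image_closure_subset[OF cont_swap] clos.hyps by blast
  moreover have "\<And>q. q \<in> ?s ` R \<Longrightarrow> q \<in> provable ar W \<Gamma> A" using clos.IH by auto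
  ultimately show ?case by (rule provable.clos)
qed

lemma prov_img:
  assumes pv: "pseudovariety ar W" and G: "\<forall>e\<in>\<Gamma>. is_pid ar W e" and ph: "cont_hom ar W B A \<phi>"
  shows "p \<in> provable ar W \<Gamma> B \<Longrightarrow> (\<phi> (fst p), \<phi> (snd p)) \<in> provable ar W \<Gamma> A"
proof (induction rule: provable.induct)
  case (base p)
  then obtain B0 u v \<psi> t ws where p: "p = (teval W B (\<psi> u # ws) t, teval W B (\<psi> v # ws) t)"
    "(B0, u, v) \<in> \<Gamma> \<or> (B0, v, u) \<in> \<Gamma>" "cont_hom ar W B0 B \<psi>" "set ws \<subseteq> Omega ar W B"
    "wf_trm ar (Suc (length ws)) t" by (rule Gamma0E)
  have uv: "u \<in> Omega ar W B0" "v \<in> Omega ar W B0" using p(2) G unfolding is_pid_def by auto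
  have e1: "\<phi> (teval W B (\<psi> u # ws) t) = teval W A ((\<phi> \<circ> \<psi>) u # map \<phi> ws) t"
    using ch_teval[OF pv ph, of "\<psi> u # ws" t] ch_into[OF p(3) uv(1)] p(4,5) by simp
  have e2: "\<phi> (teval W B (\<psi> v # ws) t) = teval W A ((\<phi> \<circ> \<psi>) v # map \<phi> ws) t"
    using ch_teval[OF pv ph, of "\<psi> v # ws" t] ch_into[OF p(3) uv(2)] p(4,5) by simp
  have "set (map \<phi> ws) \<subseteq> Omega ar W A" using p(4) ch_into[OF ph] by auto
  moreover have "wf_trm ar (Suc (length (map \<phi> ws))) t" using p(5) by simp
  ultimately have "(teval W A ((\<phi> \<circ> \<psi>) u # map \<phi> ws) t, teval W A ((\<phi> \<circ> \<psi>) v # map \<phi> ws) t) \<in> Gamma0 ar W \<Gamma> A"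
    using Gamma0I[OF p(2) ch_comp[OF p(3) ph]] by blast
  then show ?case unfolding p(1) fst_conv snd_conv e1 e2 by (rule provable.base)
next
  case (trans x y z)
  then show ?case using provable.trans by simp
next
  case (clos p R)
  let ?s = "\<lambda>p. (\<phi> (fst p), \<phi> (snd p))"
  have "?s p \<in> prod_topology (OmegaTop ar W A) (OmegaTop ar W A) closure_of (?s ` R)"
    using continuous_map_image_closure_subset[OF cont_pair[OF ch_cont[OF ph]]] clos.hyps by blast
  moreover have "\<And>q. q \<in> ?s ` R \<Longrightarrow> q \<in> provable ar W \<Gamma> A" using clos.IH by auto
  ultimately show ?case by (rule provable.clos)
qed

lemma prov_ctx:
  assumes pv: "pseudovariety ar W" and G: "\<forall>e\<in>\<Gamma>. is_pid ar W e"
    and ws: "set ws \<subseteq> Omega ar W A" and t: "wf_trm ar (Suc (length ws)) t"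
  shows "p \<in> provable ar W \<Gamma> A \<Longrightarrow> (teval W A (fst p # ws) t, teval W A (snd p # ws) t) \<in> provable ar W \<Gamma> A"
proof (induction rule: provable.induct)
  case (base p)
  then obtain B u v \<psi> t' ws' where p: "p = (teval W A (\<psi> u # ws') t', teval W A (\<psi> v # ws') t')"
    "(B, u, v) \<in> \<Gamma> \<or> (B, v, u) \<in> \<Gamma>" "cont_hom ar W B A \<psi>" "set ws' \<subseteq> Omega ar W A"
    "wf_trm ar (Suc (length ws')) t'" by (rule Gamma0E)
  define s where "s = (\<lambda>i. if i = 0 then t' else TVar (Suc (length ws') + (i - 1)))"
  define t'' where "t'' = tsub s t"
  have wf'': "wf_trm ar (Suc (length (ws' @ ws))) t''"
    unfolding t''_def
  proof (rule wf_tsub[OF t])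
    fix i assume "i < Suc (length ws)"
    then show "wf_trm ar (Suc (length (ws' @ ws))) (s i)"
      using wf_trm_mono[OF p(5)] by (cases i) (auto simp: s_def)
  qed
  have ws2: "set (ws' @ ws) \<subseteq> Omega ar W A" using ws p(4) by simp
  have "(teval W A (\<psi> u # ws' @ ws) t'', teval W A (\<psi> v # ws' @ ws) t'') \<in> Gamma0 ar W \<Gamma> A"
    by (rule Gamma0I[OF p(2,3) ws2 wf''])
  moreover have "teval W A (\<psi> u # ws' @ ws) t'' = teval W A (fst p # ws) t"
    unfolding t''_def s_def p(1) fst_conv by (rule ctx_eval[OF p(5) t])
  moreover have "teval W A (\<psi> v # ws' @ ws) t'' = teval W A (snd p # ws) t"
    unfolding t''_def s_def p(1) snd_conv by (rule ctx_eval[OF p(5) t])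
  ultimately show ?case by (simp add: provable.base)
next
  case (trans x y z)
  then show ?case using provable.trans by simp
next
  case (clos p R)
  let ?s = "\<lambda>q. (teval W A (fst q # ws) t, teval W A (snd q # ws) t)"
  have "?s p \<in> prod_topology (OmegaTop ar W A) (OmegaTop ar W A) closure_of (?s ` R)"
    using continuous_map_image_closure_subset[OF cont_pair[OF teval_cont[OF pv ws t]]] clos.hyps by blast
  moreover have "\<And>q. q \<in> ?s ` R \<Longrightarrow> q \<in> provable ar W \<Gamma> A" using clos.IH by auto
  ultimately show ?case by (rule provable.clos)
qed



lemma hom_coord:
  assumes w: "w \<in> Omega ar W A" and C: "C \<in> W" "c \<in> A \<rightarrow>\<^sub>E fst C" and k: "k \<in> idx W A"
    and h: "is_hom ar C (fst k) h" "restrict (h \<circ> c) A = snd k"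
  shows "w k = h (w (C,c))"
proof -
  obtain K a where Ka: "k = (K,a)" by (cases k)
  have KW: "K \<in> W" using k Ka by (simp add: idx_iff)
  have hk: "is_hom ar C K h" "restrict (h \<circ> c) A = a" using h Ka by simp_all
  have "w (K, restrict (h \<circ> c) A) = h (w (C,c))" by (rule Omega_hom[OF w C(1) KW hk(1) C(2)])
  then have "w (K,a) = h (w (C,c))" by (simp only: hk(2))
  then show ?thesis by (simp only: Ka)
qed

lemma eval_alg_hom:
  assumes Ta: "(T,a) \<in> idx W A"
  shows "alg_hom_to ar W A T (\<lambda>z. z (T,a))"
  unfolding alg_hom_to_def
proof (intro conjI allI impI)
  show "continuous_map (OmegaTop ar W A) (discrete_topology (fst T)) (\<lambda>z. z (T,a))"
  proof (rule cont_discrete)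
    show "x (T,a) \<in> fst T" if "x \<in> Omega ar W A" for x using Omega_val[OF that Ta] .
    fix x assume "x \<in> Omega ar W A"
    have "\<forall>y\<in>Omega ar W A. (\<forall>i\<in>{(T,a)}. y i = x i) \<longrightarrow> y (T,a) = x (T,a)" by simp
    then show "\<exists>J. finite J \<and> J \<subseteq> idx W A \<and> (\<forall>y\<in>Omega ar W A. (\<forall>i\<in>J. y i = x i) \<longrightarrow> y (T,a) = x (T,a))"
      using Ta by (intro exI[of _ "{(T,a)}"]) simp
  qed
  fix f ws assume "length ws = ar f \<and> set ws \<subseteq> Omega ar W A"
  show "omop W A f ws (T,a) = snd T f (map (\<lambda>z. z (T,a)) ws)" by (rule omop_at[OF Ta])
qed

lemma ch_coord_alg_hom:
  assumes ph: "cont_hom ar W B A \<phi>" and Ta: "(T,a) \<in> idx W A"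
  shows "alg_hom_to ar W B T (\<lambda>z. \<phi> z (T,a))"
  unfolding alg_hom_to_def
proof (intro conjI allI impI)
  have "continuous_map (OmegaTop ar W B) (discrete_topology (fst T)) ((\<lambda>z. z (T,a)) \<circ> \<phi>)"
    using ch_cont[OF ph] alg_hom_cont[OF eval_alg_hom[OF Ta]] by (rule continuous_map_compose)
  then show "continuous_map (OmegaTop ar W B) (discrete_topology (fst T)) (\<lambda>z. \<phi> z (T,a))"
    by (simp add: o_def)
  fix f ws assume fw: "length ws = ar f \<and> set ws \<subseteq> Omega ar W B"
  have "\<phi> (omop W B f ws) = omop W A f (map \<phi> ws)" using ch_op[OF ph] fw by blast
  then show "\<phi> (omop W B f ws) (T,a) = snd T f (map (\<lambda>z. \<phi> z (T,a)) ws)"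
    using omop_at[OF Ta] by (simp add: o_def)
qed

definition sub_hom :: "'f alg set \<Rightarrow> nat set \<Rightarrow> nat set \<Rightarrow> (nat \<Rightarrow> 'f iop) \<Rightarrow> 'f iop \<Rightarrow> 'f iop" where
  "sub_hom W B A \<xi> z = restrict (\<lambda>k. z (fst k, restrict (\<lambda>b. \<xi> b k) B)) (idx W A)"

lemma sub_idx:
  assumes xi: "\<And>b. b \<in> B \<Longrightarrow> \<xi> b \<in> Omega ar W A" and Ta: "(T,a) \<in> idx W A"
  shows "(T, restrict (\<lambda>b. \<xi> b (T,a)) B) \<in> idx W B"
proof -
  have "restrict (\<lambda>b. \<xi> b (T,a)) B \<in> B \<rightarrow>\<^sub>E fst T"
    using Omega_val[OF xi Ta] by auto
  then show ?thesis using Ta by (simp add: idx_iff)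
qed

lemma sub_hom_at: "(T,a) \<in> idx W A \<Longrightarrow> sub_hom W B A \<xi> z (T,a) = z (T, restrict (\<lambda>b. \<xi> b (T,a)) B)"
  unfolding sub_hom_def by simp

lemma sub_hom_ch:
  assumes pv: "pseudovariety ar W" and xi: "\<And>b. b \<in> B \<Longrightarrow> \<xi> b \<in> Omega ar W A"
  shows "cont_hom ar W B A (sub_hom W B A \<xi>)"
proof -
  have into: "sub_hom W B A \<xi> z \<in> Omega ar W A" if z: "z \<in> Omega ar W B" for z
  proof (rule OmegaI)
    show "sub_hom W B A \<xi> z \<in> extensional (idx W A)" unfolding sub_hom_def by (rule restrict_extensional)
    fix T a assume Ta: "(T,a) \<in> idx W A"
    show "sub_hom W B A \<xi> z (T,a) \<in> fst T"
      unfolding sub_hom_at[OF Ta] by (rule Omega_val[OF z sub_idx[OF xi Ta]])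
  next
    fix T T' h a assume T: "T \<in> W" "T' \<in> W" "is_hom ar T T' h" "a \<in> A \<rightarrow>\<^sub>E fst T"
    have Ta: "(T,a) \<in> idx W A" using T by (simp add: idx_iff)
    have Ta': "(T', restrict (h \<circ> a) A) \<in> idx W A" using T restrict_hom_idx by (simp add: idx_iff)
    let ?c = "restrict (\<lambda>b. \<xi> b (T,a)) B"
    have cB: "?c \<in> B \<rightarrow>\<^sub>E fst T" using sub_idx[OF xi Ta] by (simp add: idx_iff)
    have "restrict (\<lambda>b. \<xi> b (T', restrict (h \<circ> a) A)) B = restrict (h \<circ> ?c) B"
    proof (rule restrict_ext)
      fix b assume b: "b \<in> B"
      show "\<xi> b (T', restrict (h \<circ> a) A) = (h \<circ> ?c) b"
        using Omega_hom[OF xi[OF b] T] b by simp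
    qed
    then have "sub_hom W B A \<xi> z (T', restrict (h \<circ> a) A) = z (T', restrict (h \<circ> ?c) B)"
      unfolding sub_hom_at[OF Ta'] by simp
    also have "\<dots> = h (z (T, ?c))" by (rule Omega_hom[OF z T(1,2,3) cB])
    also have "\<dots> = h (sub_hom W B A \<xi> z (T,a))" unfolding sub_hom_at[OF Ta] ..
    finally show "sub_hom W B A \<xi> z (T', restrict (h \<circ> a) A) = h (sub_hom W B A \<xi> z (T,a))" .
  qed
  show ?thesis
    unfolding cont_hom_def
  proof (intro conjI allI impI)
    show "continuous_map (OmegaTop ar W B) (OmegaTop ar W A) (sub_hom W B A \<xi>)"
    proof (rule cont_coord)
      show "sub_hom W B A \<xi> x \<in> Omega ar W A" if "x \<in> Omega ar W B" for x using into that .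
      fix k assume k: "k \<in> idx W A"
      obtain T a where Ta: "k = (T,a)" by (cases k)
      have j: "(T, restrict (\<lambda>b. \<xi> b (T,a)) B) \<in> idx W B" using sub_idx[OF xi] k Ta by simp
      have "\<forall>x\<in>Omega ar W B. \<forall>y\<in>Omega ar W B. x (T, restrict (\<lambda>b. \<xi> b (T,a)) B) = y (T, restrict (\<lambda>b. \<xi> b (T,a)) B)
         \<longrightarrow> sub_hom W B A \<xi> x k = sub_hom W B A \<xi> y k"
      proof -
        have kk: "(T,a) \<in> idx W A" using k Ta by simp
        show ?thesis unfolding Ta sub_hom_at[OF kk] by simp
      qed
      then show "\<exists>j\<in>idx W B. \<forall>x\<in>Omega ar W B. \<forall>y\<in>Omega ar W B. x j = y j \<longrightarrow> sub_hom W B A \<xi> x k = sub_hom W B A \<xi> y k"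
        using j by (rule bexI)
    qed
    fix f ws assume fw: "length ws = ar f \<and> set ws \<subseteq> Omega ar W B"
    show "sub_hom W B A \<xi> (omop W B f ws) = omop W A f (map (sub_hom W B A \<xi>) ws)"
    proof (rule ext)
      fix k show "sub_hom W B A \<xi> (omop W B f ws) k = omop W A f (map (sub_hom W B A \<xi>) ws) k"
      proof (cases "k \<in> idx W A")
        case True
        obtain T a where Ta: "k = (T,a)" by (cases k)
        have k': "(T,a) \<in> idx W A" using True Ta by simp
        have j: "(T, restrict (\<lambda>b. \<xi> b (T,a)) B) \<in> idx W B" by (rule sub_idx[OF xi k'])
        have eq: "map (\<lambda>w. w (T,a)) (map (sub_hom W B A \<xi>) ws) = map (\<lambda>w. w (T, restrict (\<lambda>b. \<xi> b (T,a)) B)) ws"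
          using sub_hom_at[OF k'] by simp
        show ?thesis unfolding Ta sub_hom_at[OF k'] omop_at[OF k'] omop_at[OF j] eq ..
      next
        case False
        then show ?thesis by (simp add: sub_hom_def omop_def)
      qed
    qed
  qed
qed

lemma sub_hom_proj:
  assumes pvV: "pseudovariety ar V" and VU: "V \<subseteq> U" and ph: "cont_hom ar V B A \<phi>"
    and xi: "\<And>b. b \<in> B \<Longrightarrow> \<xi> b \<in> Omega ar U A"
    and xip: "\<And>b. b \<in> B \<Longrightarrow> proj V A (\<xi> b) = \<phi> (gen V B b)"
    and u: "u \<in> Omega ar U B"
  shows "proj V A (sub_hom U B A \<xi> u) = \<phi> (proj V B u)"
proof (rule ext)
  fix k show "proj V A (sub_hom U B A \<xi> u) k = \<phi> (proj V B u) k"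
  proof (cases "k \<in> idx V A")
    case True
    obtain T a where Ta: "k = (T,a)" by (cases k)
    have kV: "(T,a) \<in> idx V A" using True Ta by simp
    have kU: "(T,a) \<in> idx U A" using kV idx_mono[OF VU] by blast
    have TV: "T \<in> V" using kV by (simp add: idx_iff)
    have pu: "proj V B u \<in> Omega ar V B" by (rule proj_Omega[OF VU u])
    have "\<phi> (proj V B u) (T,a) = proj V B u (T, restrict (\<lambda>b. \<phi> (gen V B b) (T,a)) B)"
      by (rule KL[OF pvV TV ch_coord_alg_hom[OF ph kV] pu])
    also have "restrict (\<lambda>b. \<phi> (gen V B b) (T,a)) B = restrict (\<lambda>b. \<xi> b (T,a)) B"
    proof (rule restrict_ext)
      fix b assume b: "b \<in> B"
      have "proj V A (\<xi> b) (T,a) = \<xi> b (T,a)" by (rule proj_at[OF kV])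
      then show "\<phi> (gen V B b) (T,a) = \<xi> b (T,a)" using xip[OF b] by simp
    qed
    also have "proj V B u (T, restrict (\<lambda>b. \<xi> b (T,a)) B) = u (T, restrict (\<lambda>b. \<xi> b (T,a)) B)"
    proof (rule proj_at)
      have "restrict (\<lambda>b. \<xi> b (T,a)) B \<in> B \<rightarrow>\<^sub>E fst T"
        using sub_idx[OF xi kU] by (simp add: idx_iff)
      then show "(T, restrict (\<lambda>b. \<xi> b (T,a)) B) \<in> idx V B" using TV by (simp add: idx_iff)
    qed
    also have "\<dots> = sub_hom U B A \<xi> u (T,a)" by (rule sub_hom_at[OF kU, symmetric])
    also have "\<dots> = proj V A (sub_hom U B A \<xi> u) (T,a)" by (rule proj_at[OF kV, symmetric])
    finally show ?thesis unfolding Ta by simp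
  next
    case False
    have "\<phi> (proj V B u) \<in> Omega ar V A" by (rule ch_into[OF ph proj_Omega[OF VU u]])
    then have "\<phi> (proj V B u) k = undefined" using Omega_ext False by (metis extensional_arb)
    then show ?thesis using False by (simp add: proj_def)
  qed
qed

lemma proj_surj:
  assumes pvU: "pseudovariety ar U" and pvV: "pseudovariety ar V" and VU: "V \<subseteq> U"
    and ne: "Omega ar U A \<noteq> {}" and x: "x \<in> Omega ar V A"
  shows "\<exists>y\<in>Omega ar U A. proj V A y = x"
proof -
  let ?Im = "proj V A ` Omega ar U A"
  have "compactin (OmegaTop ar U A) (Omega ar U A)"
    using Omega_compact[OF pvU] unfolding compact_space_def topspace_OmegaTop .
  then have "compactin (OmegaTop ar V A) ?Im" using proj_cont[OF VU] by (rule image_compactin)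
  then have cl: "closedin (OmegaTop ar V A) ?Im" using Omega_Hausdorff compactin_imp_closedin by blast
  have "x \<in> (OmegaTop ar V A) closure_of ?Im"
    unfolding in_closure_of
  proof (intro conjI allI impI)
    show "x \<in> topspace (OmegaTop ar V A)" using x by (simp add: topspace_OmegaTop)
    fix N assume N: "x \<in> N \<and> openin (OmegaTop ar V A) N"
    obtain J where J: "finite J" "J \<subseteq> idx V A" "\<forall>y\<in>Omega ar V A. (\<forall>i\<in>J. y i = x i) \<longrightarrow> y \<in> N"
      using cyl_of_open[OF conjunct2[OF N] conjunct1[OF N]] by (elim exE conjE) (rule that; assumption)
    obtain C c H where CcH: "C \<in> V" "c \<in> A \<rightarrow>\<^sub>E fst C"
      "\<forall>k\<in>J. is_hom ar C (fst k) (H k) \<and> restrict (H k \<circ> c) A = snd k"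
      "\<forall>x\<in>fst C. \<forall>y\<in>fst C. (\<forall>k\<in>J. H k x = H k y) \<longrightarrow> x = y"
      using prod_for[OF pvV J(1,2)] by (elim exE conjE) (rule that; assumption)
    let ?Q = "((\<lambda>w. w (C,c)) ` Omega ar U A, snd C)"
    have Q: "?Q \<in> V" "is_hom ar ?Q C id" "c \<in> A \<rightarrow>\<^sub>E fst ?Q"
      using sub_image[OF pvU pvV VU CcH(1,2) ne] by simp_all
    have "x (C, restrict (id \<circ> c) A) = id (x (?Q,c))" by (rule Omega_hom[OF x Q(1) CcH(1) Q(2) Q(3)])
    moreover have "restrict (id \<circ> c) A = c" using CcH(2) by (simp add: PiE_def extensional_restrict)
    ultimately have "x (C,c) = x (?Q,c)" by simp
    moreover have "x (?Q,c) \<in> fst ?Q"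
    proof (rule Omega_val[OF x])
      show "(?Q, c) \<in> idx V A" using Q(1,3) unfolding idx_iff by (intro conjI)
    qed
    ultimately have "x (C,c) \<in> (\<lambda>w. w (C,c)) ` Omega ar U A" by simp
    then obtain y0 where y0: "y0 \<in> Omega ar U A" "x (C,c) = y0 (C,c)" by (rule imageE)
    have CU: "C \<in> U" using CcH(1) VU by blast
    have "proj V A y0 \<in> N"
    proof -
      have "\<forall>i\<in>J. proj V A y0 i = x i"
      proof
        fix k assume k: "k \<in> J"
        have kV: "k \<in> idx V A" using k J(2) by blast
        have kU: "k \<in> idx U A" using kV idx_mono[OF VU] by blast
        have hk: "is_hom ar C (fst k) (H k) \<and> restrict (H k \<circ> c) A = snd k" using CcH(3) k by (rule bspec)
        have "y0 k = H k (y0 (C,c))" by (rule hom_coord[OF y0(1) CU CcH(2) kU conjunct1[OF hk] conjunct2[OF hk]])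
        moreover have "x k = H k (x (C,c))" by (rule hom_coord[OF x CcH(1,2) kV conjunct1[OF hk] conjunct2[OF hk]])
        ultimately have "y0 k = x k" using y0(2) by simp
        then show "proj V A y0 k = x k" using proj_at[OF kV] by simp
      qed
      moreover have "proj V A y0 \<in> Omega ar V A" by (rule proj_Omega[OF VU y0(1)])
      ultimately show ?thesis using J(3) by blast
    qed
    then show "\<exists>y. y \<in> ?Im \<and> y \<in> N" using y0(1) by blast
  qed
  then have "x \<in> ?Im" using cl closure_of_closedin by blast
  then show ?thesis by blast
qed



lemma Mods_holds: "T \<in> Mods ar W \<Gamma> \<Longrightarrow> e \<in> \<Gamma> \<Longrightarrow> holds ar W T e"
  unfolding Mods_def by blast

lemma Mods_in: "T \<in> Mods ar W \<Gamma> \<Longrightarrow> T \<in> W"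
  unfolding Mods_def by blast

lemma holdsD: "holds ar W T (B,u,v) \<Longrightarrow> alg_hom_to ar W B T \<psi> \<Longrightarrow> \<psi> u = \<psi> v"
  unfolding holds_def by simp

lemma holdsI: "(\<And>\<psi>. alg_hom_to ar W B T \<psi> \<Longrightarrow> \<psi> u = \<psi> v) \<Longrightarrow> holds ar W T (B,u,v)"
  unfolding holds_def by simp

lemma pid_parts: "is_pid ar W (B,u,v) \<Longrightarrow> finite B \<and> u \<in> Omega ar W B \<and> v \<in> Omega ar W B"
  unfolding is_pid_def by simp

lemma prov_closed:
  assumes G: "\<forall>e\<in>\<Gamma>. is_pid ar W e" and pv: "pseudovariety ar W"
  shows "closedin (prod_topology (OmegaTop ar W A) (OmegaTop ar W A)) (provable ar W \<Gamma> A)"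
proof -
  have "provable ar W \<Gamma> A \<subseteq> topspace (prod_topology (OmegaTop ar W A) (OmegaTop ar W A))"
    using prov_Omega[OF G pv] by (auto simp: topspace_OmegaTop)
  moreover have "prod_topology (OmegaTop ar W A) (OmegaTop ar W A) closure_of (provable ar W \<Gamma> A) \<subseteq> provable ar W \<Gamma> A"
    using provable.clos by blast
  ultimately show ?thesis using closure_of_subset_eq by blast
qed

theorem proposition4p2:
  fixes ar :: "'f::finite \<Rightarrow> nat"
    and U V :: "'f alg set"
    and \<Sigma> \<Gamma> :: "'f pid set"
  assumes "pseudovariety ar U" and "pseudovariety ar V" and "V \<subseteq> U"
    and "\<forall>e\<in>\<Sigma>. is_pid ar U e"
    and "V = Mods ar U \<Sigma>"
    and "h_strong ar U \<Sigma>"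
    and "\<forall>e\<in>\<Sigma>. t_strong ar U e"
    and "\<forall>e\<in>\<Gamma>. is_pid ar U e"
    and "Mods ar U \<Gamma> \<subseteq> V"
    and "h_strong ar V (proj_set V \<Gamma>)"
  shows "h_strong ar U \<Gamma>"
proof -
  note pvU = assms(1) and pvV = assms(2) and VU = assms(3) and SP = assms(4) and Vdef = assms(5)
    and hS = assms(6) and tS = assms(7) and GP = assms(8) and MG = assms(9) and hG = assms(10)
  have sig: "(x, y) \<in> provable ar U \<Gamma> B" if e: "(B, x, y) \<in> \<Sigma>" for B x y
  proof -
    have ts: "t_strong ar U (B, x, y)" using tS e by blast
    have "\<forall>T\<in>Mods ar U \<Gamma>. holds ar U T (B, x, y)"
    proof
      fix T assume "T \<in> Mods ar U \<Gamma>"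
      then have "T \<in> Mods ar U \<Sigma>" using MG Vdef by blast
      then show "holds ar U T (B, x, y)" using e by (rule Mods_holds)
    qed
    then show ?thesis using ts GP unfolding t_strong_def by simp
  qed
  have SigInc: "p \<in> provable ar U \<Gamma> A" if "p \<in> provable ar U \<Sigma> A" for p A
    using that
  proof (induction rule: provable.induct)
    case (base p)
    then obtain B u v \<phi> t ws where p: "p = (teval U A (\<phi> u # ws) t, teval U A (\<phi> v # ws) t)"
      "(B, u, v) \<in> \<Sigma> \<or> (B, v, u) \<in> \<Sigma>" "cont_hom ar U B A \<phi>" "set ws \<subseteq> Omega ar U A"
      "wf_trm ar (Suc (length ws)) t" by (rule Gamma0E)
    have uv: "(u, v) \<in> provable ar U \<Gamma> B"
    proof (cases "(B, u, v) \<in> \<Sigma>")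
      case True
      then show ?thesis by (rule sig)
    next
      case False
      then have "(B, v, u) \<in> \<Sigma>" using p(2) by blast
      then have "(v, u) \<in> provable ar U \<Gamma> B" by (rule sig)
      then show ?thesis using prov_sym by fastforce
    qed
    have "(\<phi> u, \<phi> v) \<in> provable ar U \<Gamma> A" using prov_img[OF pvU GP p(3) uv] by simp
    then show ?case using prov_ctx[OF pvU GP p(4,5)] unfolding p(1) by fastforce
  next
    case (trans x y z)
    show ?case using trans.IH by (rule provable.trans)
  next
    case (clos p R)
    show ?case by (rule provable.clos[OF clos.hyps(1) clos.IH])
  qed
  have ker: "(x, y) \<in> provable ar U \<Gamma> A"
    if A: "finite A" and xy: "x \<in> Omega ar U A" "y \<in> Omega ar U A" "proj V A x = proj V A y" for A x y
  proof -
    have "is_pid ar U (A, x, y)" unfolding is_pid_def using A xy by simp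
    moreover have "\<forall>T\<in>Mods ar U \<Sigma>. holds ar U T (A, x, y)"
    proof
      fix T assume T: "T \<in> Mods ar U \<Sigma>"
      then have TV: "T \<in> V" using Vdef by simp
      have TU: "T \<in> U" using TV VU by blast
      show "holds ar U T (A, x, y)"
      proof (rule holdsI)
        fix \<psi> assume psi: "alg_hom_to ar U A T \<psi>"
        let ?a = "restrict (\<lambda>b. \<psi> (gen U A b)) A"
        have aT: "?a \<in> A \<rightarrow>\<^sub>E fst T" using alg_hom_into[OF psi gen_Omega] by auto
        have kV: "(T, ?a) \<in> idx V A" using TV aT by (simp add: idx_iff)
        have "\<psi> x = x (T, ?a)" by (rule KL[OF pvU TU psi xy(1)])
        also have "\<dots> = proj V A x (T, ?a)" by (rule proj_at[OF kV, symmetric])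
        also have "\<dots> = proj V A y (T, ?a)" unfolding xy(3) ..
        also have "\<dots> = y (T, ?a)" by (rule proj_at[OF kV])
        also have "\<dots> = \<psi> y" by (rule KL[OF pvU TU psi xy(2), symmetric])
        finally show "\<psi> x = \<psi> y" .
      qed
    qed
    ultimately have "(x, y) \<in> provable ar U \<Sigma> A" using hS unfolding h_strong_def by blast
    then show ?thesis by (rule SigInc)
  qed
  have mods: "T \<in> Mods ar U \<Gamma>" if T: "T \<in> Mods ar V (proj_set V \<Gamma>)" for T
  proof -
    have TV: "T \<in> V" using T by (rule Mods_in)
    have TU: "T \<in> U" using TV VU by blast
    have "holds ar U T e" if e: "e \<in> \<Gamma>" for e
    proof -
      obtain B u' v' where e': "e = (B, u', v')" by (cases e)
      have pid: "finite B \<and> u' \<in> Omega ar U B \<and> v' \<in> Omega ar U B" using GP e e' pid_parts by blast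
      have inP: "(B, proj V B u', proj V B v') \<in> proj_set V \<Gamma>" unfolding proj_set_def using e e' by blast
      have hV: "holds ar V T (B, proj V B u', proj V B v')" using Mods_holds[OF T inP] .
      show ?thesis unfolding e'
      proof (rule holdsI)
        fix \<psi> assume psi: "alg_hom_to ar U B T \<psi>"
        let ?a = "restrict (\<lambda>b. \<psi> (gen U B b)) B"
        have aT: "?a \<in> B \<rightarrow>\<^sub>E fst T" using alg_hom_into[OF psi gen_Omega] by auto
        have kV: "(T, ?a) \<in> idx V B" using TV aT by (simp add: idx_iff)
        have "proj V B u' (T, ?a) = proj V B v' (T, ?a)"
          by (rule holdsD[OF hV eval_alg_hom[OF kV]])
        then have "u' (T, ?a) = v' (T, ?a)" unfolding proj_at[OF kV] .
        then show "\<psi> u' = \<psi> v'" using KL[OF pvU TU psi] pid by simp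
      qed
    qed
    then show ?thesis unfolding Mods_def using TU by blast
  qed
  show ?thesis
    unfolding h_strong_def
  proof (intro conjI allI impI)
    show "\<forall>e\<in>\<Gamma>. is_pid ar U e" by (rule GP)
    fix A u v assume H: "is_pid ar U (A, u, v) \<and> (\<forall>T\<in>Mods ar U \<Gamma>. holds ar U T (A, u, v))"
    have A: "finite A" and u: "u \<in> Omega ar U A" and v: "v \<in> Omega ar U A" using H pid_parts by blast+
    have ne: "Omega ar U A \<noteq> {}" using u by blast
    have "(proj V A u, proj V A v) \<in> provable ar V (proj_set V \<Gamma>) A"
    proof -
      have "is_pid ar V (A, proj V A u, proj V A v)"
        unfolding is_pid_def using A proj_Omega[OF VU u] proj_Omega[OF VU v] by simp
      moreover have "\<forall>T\<in>Mods ar V (proj_set V \<Gamma>). holds ar V T (A, proj V A u, proj V A v)"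
      proof
        fix T assume T: "T \<in> Mods ar V (proj_set V \<Gamma>)"
        have hU: "holds ar U T (A, u, v)" using H mods[OF T] by blast
        show "holds ar V T (A, proj V A u, proj V A v)"
        proof (rule holdsI)
          fix \<psi> assume psi: "alg_hom_to ar V A T \<psi>"
          have "alg_hom_to ar U A T (\<psi> \<circ> proj V A)"
            unfolding alg_hom_to_def
          proof (intro conjI allI impI)
            show "continuous_map (OmegaTop ar U A) (discrete_topology (fst T)) (\<psi> \<circ> proj V A)"
              using proj_cont[OF VU] alg_hom_cont[OF psi] by (rule continuous_map_compose)
            fix f ws assume fw: "length ws = ar f \<and> set ws \<subseteq> Omega ar U A"
            have sub: "set (map (proj V A) ws) \<subseteq> Omega ar V A" using fw proj_Omega[OF VU] by auto
            have "\<psi> (omop V A f (map (proj V A) ws)) = snd T f (map \<psi> (map (proj V A) ws))"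
              by (rule alg_hom_op[OF psi _ sub]) (use fw in simp)
            then show "(\<psi> \<circ> proj V A) (omop U A f ws) = snd T f (map (\<psi> \<circ> proj V A) ws)"
              by (simp add: proj_omop[OF VU])
          qed
          then have "(\<psi> \<circ> proj V A) u = (\<psi> \<circ> proj V A) v" by (rule holdsD[OF hU])
          then show "\<psi> (proj V A u) = \<psi> (proj V A v)" by simp
        qed
      qed
      ultimately show ?thesis using hG unfolding h_strong_def by blast
    qed
    define S where "S = provable ar U \<Gamma> A"
    define R where "R = (\<lambda>p. (proj V A (fst p), proj V A (snd p))) ` S"
    have SO: "S \<subseteq> Omega ar U A \<times> Omega ar U A" unfolding S_def using prov_Omega[OF GP pvU] by blast
    have Rcl: "closedin (prod_topology (OmegaTop ar V A) (OmegaTop ar V A)) R"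
    proof -
      have "compact_space (prod_topology (OmegaTop ar U A) (OmegaTop ar U A))"
        using Omega_compact[OF pvU] by (simp add: compact_space_prod_topology)
      then have "compactin (prod_topology (OmegaTop ar U A) (OmegaTop ar U A)) S"
        using prov_closed[OF GP pvU] unfolding S_def by (rule closedin_compact_space)
      then have "compactin (prod_topology (OmegaTop ar V A) (OmegaTop ar V A)) R"
        unfolding R_def using cont_pair[OF proj_cont[OF VU]] by (rule image_compactin)
      moreover have "Hausdorff_space (prod_topology (OmegaTop ar V A) (OmegaTop ar V A))"
        by (simp add: Hausdorff_space_prod_topology Omega_Hausdorff)
      ultimately show ?thesis using compactin_imp_closedin by blast
    qed
    have lift: "p \<in> R" if "p \<in> provable ar V (proj_set V \<Gamma>) A" for p
      using that
    proof (induction rule: provable.induct)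
      case (base p)
      then obtain B u1 v1 \<phi> t ws where p: "p = (teval V A (\<phi> u1 # ws) t, teval V A (\<phi> v1 # ws) t)"
        "(B, u1, v1) \<in> proj_set V \<Gamma> \<or> (B, v1, u1) \<in> proj_set V \<Gamma>" "cont_hom ar V B A \<phi>"
        "set ws \<subseteq> Omega ar V A" "wf_trm ar (Suc (length ws)) t" by (rule Gamma0E)
      obtain u0 v0 where uv0: "u1 = proj V B u0" "v1 = proj V B v0" "(B, u0, v0) \<in> \<Gamma> \<or> (B, v0, u0) \<in> \<Gamma>"
      proof (cases "(B, u1, v1) \<in> proj_set V \<Gamma>")
        case True
        then obtain a b where "u1 = proj V B a" "v1 = proj V B b" "(B, a, b) \<in> \<Gamma>"
          unfolding proj_set_def by blast
        then show ?thesis using that by blast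
      next
        case False
        then have "(B, v1, u1) \<in> proj_set V \<Gamma>" using p(2) by blast
        then obtain a b where "v1 = proj V B a" "u1 = proj V B b" "(B, a, b) \<in> \<Gamma>"
          unfolding proj_set_def by blast
        then show ?thesis using that by blast
      qed
      have u0v0: "u0 \<in> Omega ar U B" "v0 \<in> Omega ar U B" using uv0(3) GP pid_parts by blast+
      have "set ws \<subseteq> proj V A ` Omega ar U A" using p(4) proj_surj[OF pvU pvV VU ne] by blast
      then obtain ws' where ws': "set ws' \<subseteq> Omega ar U A" "ws = map (proj V A) ws'"
        using list_lift by blast
      have "\<forall>b\<in>B. \<exists>y. y \<in> Omega ar U A \<and> proj V A y = \<phi> (gen V B b)"
      proof
        fix b assume b: "b \<in> B"
        have "\<phi> (gen V B b) \<in> Omega ar V A" by (rule ch_into[OF p(3) gen_Omega[OF b]])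
        then show "\<exists>y. y \<in> Omega ar U A \<and> proj V A y = \<phi> (gen V B b)"
          using proj_surj[OF pvU pvV VU ne] by blast
      qed
      from bchoice[OF this] obtain \<xi> where xi: "\<forall>b\<in>B. \<xi> b \<in> Omega ar U A \<and> proj V A (\<xi> b) = \<phi> (gen V B b)"
        by (rule exE)
      have xi1: "\<xi> b \<in> Omega ar U A" if "b \<in> B" for b using xi that by blast
      have xi2: "proj V A (\<xi> b) = \<phi> (gen V B b)" if "b \<in> B" for b using xi that by blast
      let ?ph = "sub_hom U B A \<xi>"
      have ch: "cont_hom ar U B A ?ph" by (rule sub_hom_ch[OF pvU xi1])
      have wf': "wf_trm ar (Suc (length ws')) t" using p(5) ws'(2) by simp
      have "(teval U A (?ph u0 # ws') t, teval U A (?ph v0 # ws') t) \<in> Gamma0 ar U \<Gamma> A"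
        by (rule Gamma0I[OF uv0(3) ch ws'(1) wf'])
      then have inS: "(teval U A (?ph u0 # ws') t, teval U A (?ph v0 # ws') t) \<in> S"
        unfolding S_def by (rule provable.base)
      have pe: "proj V A (teval U A (?ph x # ws') t) = teval V A (\<phi> (proj V B x) # ws) t"
        if x: "x \<in> Omega ar U B" for x
      proof -
        have "proj V A (teval U A (?ph x # ws') t) = teval V A (map (proj V A) (?ph x # ws')) t"
          by (rule proj_teval[OF VU]) (use wf' in simp)
        also have "map (proj V A) (?ph x # ws') = \<phi> (proj V B x) # ws"
          using sub_hom_proj[OF pvV VU p(3) xi1 xi2 x] ws'(2) by simp
        finally show ?thesis .
      qed
      show ?case unfolding R_def p(1) uv0(1,2)
        by (rule image_eqI[OF _ inS]) (simp add: pe[OF u0v0(1)] pe[OF u0v0(2)])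
    next
      case (trans x y z)
      obtain a b where ab: "(a, b) \<in> S" "x = proj V A a" "y = proj V A b"
        using trans.IH(1) unfolding R_def by auto
      obtain c d where cd: "(c, d) \<in> S" "y = proj V A c" "z = proj V A d"
        using trans.IH(2) unfolding R_def by auto
      have "b \<in> Omega ar U A" "c \<in> Omega ar U A" using ab(1) cd(1) SO by auto
      then have "(b, c) \<in> S" unfolding S_def using ker[OF A] ab(3) cd(2) by simp
      then have "(a, d) \<in> S" using ab(1) cd(1) provable.trans unfolding S_def by metis
      then show ?case unfolding R_def using ab(2) cd(3) by force
    next
      case (clos p R0)
      have "R0 \<subseteq> R" using clos.IH by blast
      then have "prod_topology (OmegaTop ar V A) (OmegaTop ar V A) closure_of R0 \<subseteq> R"
        using Rcl by (rule closure_of_minimal)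
      then show ?case using clos.hyps by blast
    qed
    have "(proj V A u, proj V A v) \<in> R" by (rule lift) fact
    then obtain a b where ab: "(a, b) \<in> S" "proj V A u = proj V A a" "proj V A v = proj V A b"
      unfolding R_def by auto
    have abO: "a \<in> Omega ar U A" "b \<in> Omega ar U A" using ab(1) SO by auto
    have "(u, a) \<in> S" unfolding S_def by (rule ker[OF A u abO(1) ab(2)])
    moreover have "(b, v) \<in> S" unfolding S_def by (rule ker[OF A abO(2) v ab(3)[symmetric]])
    ultimately have "(u, v) \<in> S" using ab(1) provable.trans unfolding S_def by metis
    then show "(u, v) \<in> provable ar U \<Gamma> A" unfolding S_def .
  qed
qed

end
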